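(* Let $M$ be a nonzero $\mathscr{D}(R,V)$-module such that $\pi M = (0)$. Then $\mathrm{Ann}_R(M) = \pi R$.
   Context: Let $(V, \pi V, k)$ be a DVR of mixed characteristic $(0,p)$ (i.e. $V$ has characteristic zero, maximal ideal generated by $\pi$, and residue field $k$ of characteristic $p>0$), and let $R$ be either $V[[x_1, \ldots, x_n]]$ or $V[x_1, \ldots, x_n]$ for some $n \geq 0$. $\mathscr{D}(R,V)$ denotes the ring of $V$-linear differential operators on $R$, and $\mathscr{D}(R,V)$-modules are left modules over it. *)

theory Defs
  imports Main "HOL-Computational_Algebra.Primes"
begin

text \<open>Elements of V[[x_0,...,x_{n-1}]] and V[x_0,...,x_{n-1}] are represented as
  coefficient functions on multi-indices (nat \<Rightarrow> nat) that vanish outside the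
  multi-indices supported in {0..<n}. V is the whole type 'v.\<close>

type_synonym 'v ser = "(nat \<Rightarrow> nat) \<Rightarrow> 'v"

definition multi_idx :: "nat \<Rightarrow> (nat \<Rightarrow> nat) set" where
  "multi_idx n = {\<alpha>. \<forall>i\<ge>n. \<alpha> i = 0}"

definition ps_carrier :: "nat \<Rightarrow> ('v::zero) ser set" where
  "ps_carrier n = {f. \<forall>\<alpha>. \<alpha> \<notin> multi_idx n \<longrightarrow> f \<alpha> = 0}"

definition poly_carrier :: "nat \<Rightarrow> ('v::zero) ser set" where
  "poly_carrier n = {f \<in> ps_carrier n. finite {\<alpha>. f \<alpha> \<noteq> 0}}"

definition ser_zero :: "('v::zero) ser" where
  "ser_zero = (\<lambda>\<alpha>. 0)"

definition ser_add :: "('v::plus) ser \<Rightarrow> 'v ser \<Rightarrow> 'v ser" where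
  "ser_add f g = (\<lambda>\<alpha>. f \<alpha> + g \<alpha>)"

definition ser_diff :: "('v::minus) ser \<Rightarrow> 'v ser \<Rightarrow> 'v ser" where
  "ser_diff f g = (\<lambda>\<alpha>. f \<alpha> - g \<alpha>)"

text \<open>Cauchy product (finite sum since multi-indices in the carrier have finite support).\<close>
definition ser_mult :: "('v::comm_ring_1) ser \<Rightarrow> 'v ser \<Rightarrow> 'v ser" where
  "ser_mult f g = (\<lambda>\<alpha>. \<Sum>\<beta>\<in>{\<beta>. \<beta> \<le> \<alpha>}. f \<beta> * g (\<lambda>i. \<alpha> i - \<beta> i))"

definition ser_const :: "('v::zero) \<Rightarrow> 'v ser" where
  "ser_const c = (\<lambda>\<alpha>. if \<alpha> = (\<lambda>i. 0) then c else 0)"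

text \<open>Operators on R are functions 'v ser \<Rightarrow> 'v ser, normalised to be 0 off the carrier.\<close>
definition extensional_op :: "('v::zero) ser set \<Rightarrow> ('v ser \<Rightarrow> 'v ser) \<Rightarrow> bool" where
  "extensional_op Rc \<delta> \<longleftrightarrow> (\<forall>f. f \<notin> Rc \<longrightarrow> \<delta> f = ser_zero)"

definition V_linear_op :: "('v::comm_ring_1) ser set \<Rightarrow> ('v ser \<Rightarrow> 'v ser) \<Rightarrow> bool" where
  "V_linear_op Rc \<delta> \<longleftrightarrow> extensional_op Rc \<delta> \<and> (\<forall>f\<in>Rc. \<delta> f \<in> Rc)
     \<and> (\<forall>f\<in>Rc. \<forall>g\<in>Rc. \<delta> (ser_add f g) = ser_add (\<delta> f) (\<delta> g))
     \<and> (\<forall>c. \<forall>f\<in>Rc. \<delta> (ser_mult (ser_const c) f) = ser_mult (ser_const c) (\<delta> f))"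

definition mult_op :: "('v::comm_ring_1) ser set \<Rightarrow> 'v ser \<Rightarrow> ('v ser \<Rightarrow> 'v ser)" where
  "mult_op Rc r = (\<lambda>f. if f \<in> Rc then ser_mult r f else ser_zero)"

text \<open>Grothendieck's V-linear differential operators of order \<le> k:
  D^0 = R-linear endomorphisms; D^{k+1} = V-linear \<delta> with [\<delta>, r] \<in> D^k for all r \<in> R.\<close>
fun diff_op :: "('v::comm_ring_1) ser set \<Rightarrow> nat \<Rightarrow> ('v ser \<Rightarrow> 'v ser) \<Rightarrow> bool" where
  "diff_op Rc 0 \<delta> \<longleftrightarrow> V_linear_op Rc \<delta> \<and>
      (\<forall>r\<in>Rc. \<forall>f\<in>Rc. \<delta> (ser_mult r f) = ser_mult r (\<delta> f))"
| "diff_op Rc (Suc k) \<delta> \<longleftrightarrow> V_linear_op Rc \<delta> \<and>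
      (\<forall>r\<in>Rc. diff_op Rc k
          (\<lambda>f. if f \<in> Rc then ser_diff (\<delta> (ser_mult r f)) (ser_mult r (\<delta> f)) else ser_zero))"

definition diff_ops :: "('v::comm_ring_1) ser set \<Rightarrow> ('v ser \<Rightarrow> 'v ser) set" where
  "diff_ops Rc = {\<delta>. \<exists>k. diff_op Rc k \<delta>}"

definition D_module :: "('v::comm_ring_1) ser set \<Rightarrow> (('v ser \<Rightarrow> 'v ser) \<Rightarrow> 'm::ab_group_add \<Rightarrow> 'm) \<Rightarrow> bool" where
  "D_module Rc act \<longleftrightarrow>
     (\<forall>\<delta>\<in>diff_ops Rc. \<forall>m m'. act \<delta> (m + m') = act \<delta> m + act \<delta> m')
   \<and> (\<forall>\<delta>\<in>diff_ops Rc. \<forall>\<delta>'\<in>diff_ops Rc. \<forall>m.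
        act (\<lambda>f. ser_add (\<delta> f) (\<delta>' f)) m = act \<delta> m + act \<delta>' m)
   \<and> (\<forall>\<delta>\<in>diff_ops Rc. \<forall>\<delta>'\<in>diff_ops Rc. \<forall>m. act (\<delta> \<circ> \<delta>') m = act \<delta> (act \<delta>' m))
   \<and> (\<forall>m. act (\<lambda>f. if f \<in> Rc then f else ser_zero) m = m)"

text \<open>Ann_R(M), with R acting through multiplication operators.\<close>
definition ann_R :: "('v::comm_ring_1) ser set \<Rightarrow> (('v ser \<Rightarrow> 'v ser) \<Rightarrow> 'm::ab_group_add \<Rightarrow> 'm) \<Rightarrow> 'v ser set" where
  "ann_R Rc act = {r \<in> Rc. \<forall>m. act (mult_op Rc r) m = 0}"

definition DVR_uniformizer :: "'v::idom \<Rightarrow> bool" where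
  "DVR_uniformizer \<pi> \<longleftrightarrow> \<pi> \<noteq> 0 \<and> \<not> \<pi> dvd 1 \<and>
     (\<forall>a. a \<noteq> 0 \<longrightarrow> (\<exists>u k. u dvd 1 \<and> a = u * \<pi> ^ k))"

end

theory Submission
  imports Defs
begin

definition okc :: "nat \<Rightarrow> ('v::zero) ser set \<Rightarrow> bool" where
  "okc n Rc \<longleftrightarrow> Rc = ps_carrier n \<or> Rc = poly_carrier n"

lemma multi_idx_le: "\<alpha> \<in> multi_idx n \<Longrightarrow> (\<beta>::nat\<Rightarrow>nat) \<le> \<alpha> \<Longrightarrow> \<beta> \<in> multi_idx n"
  unfolding multi_idx_def le_fun_def by (simp, metis le_0_eq)

lemma multi_idx_diff: "\<alpha> \<in> multi_idx n \<Longrightarrow> (\<lambda>i. \<alpha> i - \<beta> i) \<in> multi_idx n"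
  unfolding multi_idx_def by simp

lemma multi_idx_add: "\<alpha> \<in> multi_idx n \<Longrightarrow> \<beta> \<in> multi_idx n \<Longrightarrow> (\<lambda>i. \<alpha> i + \<beta> i) \<in> multi_idx n"
  unfolding multi_idx_def by simp

lemma multi_idx_upd: "\<alpha> \<in> multi_idx n \<Longrightarrow> i < n \<Longrightarrow> \<alpha>(i := k) \<in> multi_idx n"
  unfolding multi_idx_def by simp

lemma multi_idx_zero: "(\<lambda>i. 0) \<in> multi_idx n"
  unfolding multi_idx_def by simp

lemma finite_le:
  assumes "\<alpha> \<in> multi_idx n"
  shows "finite {\<beta>::nat\<Rightarrow>nat. \<beta> \<le> \<alpha>}"
proof -
  let ?A = "\<Union>i<n. {0..\<alpha> i}"
  let ?g = "\<lambda>xs::nat list. \<lambda>i. if i < n then xs ! i else 0"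
  have "{\<beta>. \<beta> \<le> \<alpha>} \<subseteq> ?g ` {xs. set xs \<subseteq> ?A \<and> length xs = n}"
  proof
    fix \<beta> assume b: "\<beta> \<in> {\<beta>. \<beta> \<le> \<alpha>}"
    hence bm: "\<beta> \<in> multi_idx n" using multi_idx_le assms by blast
    have "\<beta> = ?g (map \<beta> [0..<n])"
      using bm unfolding multi_idx_def by (auto simp: fun_eq_iff)
    moreover have "set (map \<beta> [0..<n]) \<subseteq> ?A" using b by (auto simp: le_fun_def)
    ultimately show "\<beta> \<in> ?g ` {xs. set xs \<subseteq> ?A \<and> length xs = n}" by force
  qed
  moreover have "finite {xs. set xs \<subseteq> ?A \<and> length xs = n}"
    by (rule finite_lists_length_eq) auto
  ultimately show ?thesis by (meson finite_imageI finite_subset)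
qed

lemma ps_eqI:
  assumes "f \<in> ps_carrier n" "g \<in> ps_carrier n" "\<And>\<alpha>. \<alpha> \<in> multi_idx n \<Longrightarrow> f \<alpha> = g \<alpha>"
  shows "f = g"
proof (rule ext)
  fix \<alpha> show "f \<alpha> = g \<alpha>"
    using assms by (cases "\<alpha> \<in> multi_idx n") (auto simp: ps_carrier_def)
qed

lemma okc_ps: "okc n Rc \<Longrightarrow> f \<in> Rc \<Longrightarrow> f \<in> ps_carrier n"
  unfolding okc_def poly_carrier_def by auto

lemma okc_out: "okc n Rc \<Longrightarrow> f \<in> Rc \<Longrightarrow> \<alpha> \<notin> multi_idx n \<Longrightarrow> f \<alpha> = 0"
  using okc_ps unfolding ps_carrier_def by blast

lemma okc_supp2:
  assumes "okc n Rc" "f \<in> Rc" "g \<in> Rc" "\<And>\<alpha>. h \<alpha> \<noteq> 0 \<Longrightarrow> f \<alpha> \<noteq> 0 \<or> g \<alpha> \<noteq> 0"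
  shows "h \<in> Rc"
proof (cases "Rc = ps_carrier n")
  case True
  then show ?thesis using assms unfolding ps_carrier_def by blast
next
  case False
  hence P: "Rc = poly_carrier n" using assms(1) okc_def by blast
  have "{\<alpha>. h \<alpha> \<noteq> 0} \<subseteq> {\<alpha>. f \<alpha> \<noteq> 0} \<union> {\<alpha>. g \<alpha> \<noteq> 0}" using assms(4) by auto
  moreover have "finite ({\<alpha>. f \<alpha> \<noteq> 0} \<union> {\<alpha>. g \<alpha> \<noteq> 0})"
    using assms(2,3) P unfolding poly_carrier_def by auto
  ultimately have "finite {\<alpha>. h \<alpha> \<noteq> 0}" using finite_subset by blast
  moreover have "h \<in> ps_carrier n" using assms(2,3,4) P unfolding poly_carrier_def ps_carrier_def by blast
  ultimately show ?thesis using P unfolding poly_carrier_def by blast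
qed

lemma okc_supp:
  assumes "okc n Rc" "f \<in> Rc" "\<And>\<alpha>. h \<alpha> \<noteq> 0 \<Longrightarrow> f \<alpha> \<noteq> 0"
  shows "h \<in> Rc"
  using okc_supp2[OF assms(1,2,2)] assms(3) by blast

lemma zero_in: "okc n Rc \<Longrightarrow> (ser_zero::('v::zero) ser) \<in> Rc"
  unfolding okc_def ps_carrier_def poly_carrier_def ser_zero_def by auto

lemma const_in: "okc n Rc \<Longrightarrow> ser_const c \<in> Rc"
proof -
  assume a: "okc n Rc"
  have "{\<alpha>. ser_const c \<alpha> \<noteq> 0} \<subseteq> {\<lambda>i. 0}" unfolding ser_const_def by auto
  hence "finite {\<alpha>. ser_const c \<alpha> \<noteq> 0}" using finite_subset by blast
  moreover have "ser_const c \<in> ps_carrier n"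
    unfolding ps_carrier_def ser_const_def using multi_idx_zero by auto
  ultimately show ?thesis using a unfolding okc_def poly_carrier_def by auto
qed

lemma add_in: "okc n Rc \<Longrightarrow> (f::('v::comm_ring_1) ser) \<in> Rc \<Longrightarrow> g \<in> Rc \<Longrightarrow> ser_add f g \<in> Rc"
  by (rule okc_supp2[of n Rc f g]) (auto simp: ser_add_def)

lemma diff_in: "okc n Rc \<Longrightarrow> (f::('v::comm_ring_1) ser) \<in> Rc \<Longrightarrow> g \<in> Rc \<Longrightarrow> ser_diff f g \<in> Rc"
  by (rule okc_supp2[of n Rc f g]) (auto simp: ser_diff_def)

definition scal :: "'v::comm_ring_1 \<Rightarrow> 'v ser \<Rightarrow> 'v ser" where
  "scal c f = (\<lambda>\<alpha>. c * f \<alpha>)"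

lemma scal_in: "okc n Rc \<Longrightarrow> f \<in> Rc \<Longrightarrow> scal c f \<in> Rc"
  by (rule okc_supp[of n Rc f]) (auto simp: scal_def)

lemma sum_in:
  fixes F :: "'a \<Rightarrow> ('v::comm_ring_1) ser"
  assumes "okc n Rc" "finite S" "\<And>j. j \<in> S \<Longrightarrow> F j \<in> Rc"
  shows "(\<lambda>\<alpha>. \<Sum>j\<in>S. F j \<alpha>) \<in> Rc"
  using assms(2,3)
proof (induction S rule: finite_induct)
  case empty
  then show ?case using zero_in[OF assms(1)] unfolding ser_zero_def by simp
next
  case (insert x T)
  have a: "F x \<in> Rc" using insert.prems by simp
  have b: "(\<lambda>\<alpha>. \<Sum>j\<in>T. F j \<alpha>) \<in> Rc" using insert.IH insert.prems by simp
  show ?case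
  proof (rule okc_supp2[OF assms(1) a b])
    fix \<alpha> assume "(\<Sum>j\<in>insert x T. F j \<alpha>) \<noteq> 0"
    then show "F x \<alpha> \<noteq> 0 \<or> (\<Sum>j\<in>T. F j \<alpha>) \<noteq> 0" using insert.hyps by auto
  qed
qed

lemma okc_ps_self: "okc n (ps_carrier n)" unfolding okc_def by simp

lemma mult_const_at:
  fixes f :: "('v::comm_ring_1) ser"
  assumes "\<alpha> \<in> multi_idx n"
  shows "ser_mult (ser_const c) f \<alpha> = c * f \<alpha>"
proof -
  have "ser_mult (ser_const c) f \<alpha> = (\<Sum>\<beta>\<in>{\<beta>. \<beta> \<le> \<alpha>}. if \<beta> = (\<lambda>i. 0) then c * f \<alpha> else 0)"
    unfolding ser_mult_def ser_const_def by (intro sum.cong) auto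
  also have "\<dots> = c * f \<alpha>"
    using finite_le[OF assms] by (simp add: le_fun_def)
  finally show ?thesis .
qed

lemma mult_const:
  fixes f :: "('v::comm_ring_1) ser"
  assumes "f \<in> ps_carrier n"
  shows "ser_mult (ser_const c) f = scal c f"
proof (rule ext)
  fix \<alpha>
  show "ser_mult (ser_const c) f \<alpha> = scal c f \<alpha>"
  proof (cases "\<alpha> \<in> multi_idx n")
    case True
    then show ?thesis using mult_const_at scal_def by metis
  next
    case False
    hence "f \<alpha> = 0" using assms unfolding ps_carrier_def by blast
    moreover have "ser_mult (ser_const c) f \<alpha> = 0"
      unfolding ser_mult_def ser_const_def
      by (rule sum.neutral) (auto simp: \<open>f \<alpha> = 0\<close>)
    ultimately show ?thesis by (simp add: scal_def)
  qed
qed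

lemma mult_in:
  fixes f g :: "('v::comm_ring_1) ser"
  assumes R: "okc n Rc" and f: "f \<in> Rc" and g: "g \<in> Rc"
  shows "ser_mult f g \<in> Rc"
proof -
  have ps: "ser_mult f g \<in> ps_carrier n"
    unfolding ps_carrier_def
  proof (intro CollectI allI impI)
    fix \<alpha> assume a: "\<alpha> \<notin> multi_idx n"
    show "ser_mult f g \<alpha> = 0" unfolding ser_mult_def
    proof (rule sum.neutral, intro ballI)
      fix \<beta> assume "\<beta> \<in> {\<beta>. \<beta> \<le> \<alpha>}"
      show "f \<beta> * g (\<lambda>i. \<alpha> i - \<beta> i) = 0"
      proof (cases "\<beta> \<in> multi_idx n")
        case True
        have "(\<lambda>i. \<alpha> i - \<beta> i) \<notin> multi_idx n"
          using a True unfolding multi_idx_def by auto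
        then show ?thesis using okc_out[OF R g] by simp
      next
        case False
        then show ?thesis using okc_out[OF R f] by simp
      qed
    qed
  qed
  show ?thesis
  proof (cases "Rc = ps_carrier n")
    case True then show ?thesis using ps by simp
  next
    case False
    hence P: "Rc = poly_carrier n" using R okc_def by blast
    let ?S = "(\<lambda>(\<beta>,\<gamma>). (\<lambda>i::nat. \<beta> i + \<gamma> i)) ` ({\<beta>. f \<beta> \<noteq> 0} \<times> {\<gamma>. g \<gamma> \<noteq> 0})"
    have "{\<alpha>. ser_mult f g \<alpha> \<noteq> 0} \<subseteq> ?S"
    proof
      fix \<alpha> assume "\<alpha> \<in> {\<alpha>. ser_mult f g \<alpha> \<noteq> 0}"
      hence "(\<Sum>\<beta>\<in>{\<beta>. \<beta> \<le> \<alpha>}. f \<beta> * g (\<lambda>i. \<alpha> i - \<beta> i)) \<noteq> 0"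
        unfolding ser_mult_def by simp
      then obtain \<beta> where b: "\<beta> \<le> \<alpha>" "f \<beta> * g (\<lambda>i. \<alpha> i - \<beta> i) \<noteq> 0"
        using sum.not_neutral_contains_not_neutral by blast
      have "\<alpha> = (\<lambda>i. \<beta> i + (\<alpha> i - \<beta> i))" using b(1) by (auto simp: le_fun_def)
      then show "\<alpha> \<in> ?S" using b(2)
        by (intro image_eqI[where x="(\<beta>, \<lambda>i. \<alpha> i - \<beta> i)"]) auto
    qed
    moreover have "finite ?S" using f g P unfolding poly_carrier_def by auto
    ultimately have "finite {\<alpha>. ser_mult f g \<alpha> \<noteq> 0}" using finite_subset by blast
    then show ?thesis using P ps unfolding poly_carrier_def by blast
  qed
qed

lemma mult_zero_right: "ser_mult f (ser_zero::('v::comm_ring_1) ser) = ser_zero"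
  unfolding ser_mult_def ser_zero_def by simp

lemma mult_add_right: "ser_mult f (ser_add g h) = ser_add (ser_mult f g) (ser_mult (f::('v::comm_ring_1) ser) h)"
  unfolding ser_mult_def ser_add_def by (simp add: distrib_left sum.distrib)

lemma mult_add_left: "ser_mult (ser_add f g) h = ser_add (ser_mult f h) (ser_mult (g::('v::comm_ring_1) ser) h)"
  unfolding ser_mult_def ser_add_def by (simp add: distrib_right sum.distrib)

lemma mult_diff_right: "ser_mult f (ser_diff g h) = ser_diff (ser_mult f g) (ser_mult (f::('v::comm_ring_1) ser) h)"
  unfolding ser_mult_def ser_diff_def by (simp add: right_diff_distrib sum_subtractf)

lemma mult_scal_right: "ser_mult f (scal c g) = scal c (ser_mult (f::('v::comm_ring_1) ser) g)"
  unfolding ser_mult_def scal_def by (simp add: sum_distrib_left mult_ac)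

lemma mult_scal_left: "ser_mult (scal c f) g = scal c (ser_mult (f::('v::comm_ring_1) ser) g)"
  unfolding ser_mult_def scal_def by (simp add: sum_distrib_left mult_ac)

lemma mult_comm_at:
  fixes f g :: "('v::comm_ring_1) ser"
  shows "ser_mult f g \<alpha> = ser_mult g f \<alpha>"
  unfolding ser_mult_def
proof (rule sum.reindex_bij_witness[of _ "\<lambda>\<beta> i. \<alpha> i - \<beta> i" "\<lambda>\<beta> i. \<alpha> i - \<beta> i"])
  have inv: "(\<lambda>i. \<alpha> i - (\<alpha> i - \<beta> i)) = \<beta>" if "\<beta> \<in> {\<beta>. \<beta> \<le> \<alpha>}" for \<beta>
    using that by (auto simp: le_fun_def)
  show "(\<lambda>i. \<alpha> i - (\<alpha> i - \<beta> i)) = \<beta>" if "\<beta> \<in> {\<beta>. \<beta> \<le> \<alpha>}" for \<beta> using inv that .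
  show "(\<lambda>i. \<alpha> i - (\<alpha> i - \<beta> i)) = \<beta>" if "\<beta> \<in> {\<beta>. \<beta> \<le> \<alpha>}" for \<beta> using inv that .
  show "(\<lambda>i. \<alpha> i - \<beta> i) \<in> {\<beta>. \<beta> \<le> \<alpha>}" for \<beta> by (simp add: le_fun_def)
  show "(\<lambda>i. \<alpha> i - \<beta> i) \<in> {\<beta>. \<beta> \<le> \<alpha>}" for \<beta> by (simp add: le_fun_def)
  show "g (\<lambda>i. \<alpha> i - \<beta> i) * f (\<lambda>i. \<alpha> i - (\<alpha> i - \<beta> i)) = f \<beta> * g (\<lambda>i. \<alpha> i - \<beta> i)"
    if "\<beta> \<in> {\<beta>. \<beta> \<le> \<alpha>}" for \<beta>
    using inv[OF that] by (simp add: mult.commute)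
qed

lemma mult_comm: "ser_mult f g = ser_mult g (f::('v::comm_ring_1) ser)"
  using mult_comm_at by (rule ext)

lemma mult_assoc_at:
  fixes f g h :: "('v::comm_ring_1) ser"
  assumes a: "\<alpha> \<in> multi_idx n"
  shows "ser_mult (ser_mult f g) h \<alpha> = ser_mult f (ser_mult g h) \<alpha>"
proof -
  have fa: "finite {\<beta>. \<beta> \<le> \<alpha>}" using finite_le[OF a] .
  have fb: "\<And>\<beta>. \<beta> \<in> {\<beta>. \<beta> \<le> \<alpha>} \<Longrightarrow> finite {\<gamma>. \<gamma> \<le> \<beta>}"
    by (rule finite_le[OF multi_idx_le[OF a]]) simp
  have fc: "\<And>\<gamma>. \<gamma> \<in> {\<beta>. \<beta> \<le> \<alpha>} \<Longrightarrow> finite {\<delta>. \<delta> \<le> (\<lambda>i. \<alpha> i - \<gamma> i)}"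
    by (rule finite_le[OF multi_idx_diff[OF a]])
  have "ser_mult (ser_mult f g) h \<alpha> =
     (\<Sum>\<beta>\<in>{\<beta>. \<beta> \<le> \<alpha>}. \<Sum>\<gamma>\<in>{\<gamma>. \<gamma> \<le> \<beta>}. f \<gamma> * g (\<lambda>i. \<beta> i - \<gamma> i) * h (\<lambda>i. \<alpha> i - \<beta> i))"
    unfolding ser_mult_def by (rule sum.cong[OF refl], rule sum_distrib_right)
  also have "\<dots> = (\<Sum>(\<beta>,\<gamma>)\<in>Sigma {\<beta>. \<beta> \<le> \<alpha>} (\<lambda>\<beta>. {\<gamma>. \<gamma> \<le> \<beta>}).
       f \<gamma> * g (\<lambda>i. \<beta> i - \<gamma> i) * h (\<lambda>i. \<alpha> i - \<beta> i))"
    by (intro sum.Sigma[OF fa] ballI fb)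
  also have "\<dots> = (\<Sum>(\<gamma>,\<delta>)\<in>Sigma {\<gamma>. \<gamma> \<le> \<alpha>} (\<lambda>\<gamma>. {\<delta>. \<delta> \<le> (\<lambda>i. \<alpha> i - \<gamma> i)}).
       f \<gamma> * (g \<delta> * h (\<lambda>i. (\<alpha> i - \<gamma> i) - \<delta> i)))"
  proof (rule sum.reindex_bij_witness[of _ "\<lambda>(\<gamma>,\<delta>). (\<lambda>i. \<gamma> i + \<delta> i, \<gamma>)" "\<lambda>(\<beta>,\<gamma>). (\<gamma>, \<lambda>i. \<beta> i - \<gamma> i)"])
    fix x assume x: "x \<in> Sigma {\<beta>. \<beta> \<le> \<alpha>} (\<lambda>\<beta>. {\<gamma>. \<gamma> \<le> \<beta>})"
    obtain \<beta> \<gamma> where xe: "x = (\<beta>, \<gamma>)" by fastforce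
    have le: "\<And>i. \<gamma> i \<le> \<beta> i" "\<And>i. \<beta> i \<le> \<alpha> i" using x xe by (auto simp: le_fun_def)
    show "(case case x of (\<beta>, \<gamma>) \<Rightarrow> (\<gamma>, \<lambda>i. \<beta> i - \<gamma> i) of (\<gamma>, \<delta>) \<Rightarrow> (\<lambda>i. \<gamma> i + \<delta> i, \<gamma>)) = x"
      using le xe by auto
    show "(case x of (\<beta>, \<gamma>) \<Rightarrow> (\<gamma>, \<lambda>i. \<beta> i - \<gamma> i)) \<in> Sigma {\<gamma>. \<gamma> \<le> \<alpha>} (\<lambda>\<gamma>. {\<delta>. \<delta> \<le> (\<lambda>i. \<alpha> i - \<gamma> i)})"
      using le xe by (auto simp: le_fun_def diff_le_mono intro: order.trans)
    have e: "(\<lambda>i. \<alpha> i - \<gamma> i - (\<beta> i - \<gamma> i)) = (\<lambda>i. \<alpha> i - \<beta> i)"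
      using le by (auto simp: fun_eq_iff)
    show "(case case x of (\<beta>, \<gamma>) \<Rightarrow> (\<gamma>, \<lambda>i. \<beta> i - \<gamma> i) of
        (\<gamma>, \<delta>) \<Rightarrow> f \<gamma> * (g \<delta> * h (\<lambda>i. \<alpha> i - \<gamma> i - \<delta> i))) =
       (case x of (\<beta>, \<gamma>) \<Rightarrow> f \<gamma> * g (\<lambda>i. \<beta> i - \<gamma> i) * h (\<lambda>i. \<alpha> i - \<beta> i))"
      using xe e by (simp add: mult_ac)
  next
    fix y assume y: "y \<in> Sigma {\<gamma>. \<gamma> \<le> \<alpha>} (\<lambda>\<gamma>. {\<delta>. \<delta> \<le> (\<lambda>i. \<alpha> i - \<gamma> i)})"
    obtain \<gamma> \<delta> where ye: "y = (\<gamma>, \<delta>)" by fastforce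
    have le: "\<And>i. \<gamma> i \<le> \<alpha> i" "\<And>i. \<delta> i \<le> \<alpha> i - \<gamma> i" using y ye by (auto simp: le_fun_def)
    show "(case case y of (\<gamma>, \<delta>) \<Rightarrow> (\<lambda>i. \<gamma> i + \<delta> i, \<gamma>) of (\<beta>, \<gamma>) \<Rightarrow> (\<gamma>, \<lambda>i. \<beta> i - \<gamma> i)) = y"
      using ye by auto
    show "(case y of (\<gamma>, \<delta>) \<Rightarrow> (\<lambda>i. \<gamma> i + \<delta> i, \<gamma>)) \<in> Sigma {\<beta>. \<beta> \<le> \<alpha>} (\<lambda>\<beta>. {\<gamma>. \<gamma> \<le> \<beta>})"
      using le ye by (auto simp: le_fun_def) (metis add.commute le_diff_conv2)
  qed
  also have "\<dots> = (\<Sum>\<gamma>\<in>{\<gamma>. \<gamma> \<le> \<alpha>}. \<Sum>\<delta>\<in>{\<delta>. \<delta> \<le> (\<lambda>i. \<alpha> i - \<gamma> i)}.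
       f \<gamma> * (g \<delta> * h (\<lambda>i. (\<alpha> i - \<gamma> i) - \<delta> i)))"
    by (intro sum.Sigma[OF fa, symmetric] ballI fc)
  also have "\<dots> = ser_mult f (ser_mult g h) \<alpha>"
    unfolding ser_mult_def by (rule sum.cong[OF refl], rule sum_distrib_left[symmetric])
  finally show ?thesis .
qed

lemma mult_assoc:
  fixes f g h :: "('v::comm_ring_1) ser"
  assumes "f \<in> ps_carrier n" "g \<in> ps_carrier n" "h \<in> ps_carrier n"
  shows "ser_mult (ser_mult f g) h = ser_mult f (ser_mult g h)"
  by (rule ps_eqI[of _ n]) (auto intro!: mult_in[OF okc_ps_self] assms mult_assoc_at)

definition comm :: "('v::comm_ring_1) ser set \<Rightarrow> ('v ser \<Rightarrow> 'v ser) \<Rightarrow> 'v ser \<Rightarrow> ('v ser \<Rightarrow> 'v ser)" where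
  "comm Rc \<delta> r = (\<lambda>f. if f \<in> Rc then ser_diff (\<delta> (ser_mult r f)) (ser_mult r (\<delta> f)) else ser_zero)"

definition zop :: "('v::comm_ring_1) ser \<Rightarrow> 'v ser" where "zop = (\<lambda>f. ser_zero)"

definition op_add :: "(('v::comm_ring_1) ser \<Rightarrow> 'v ser) \<Rightarrow> ('v ser \<Rightarrow> 'v ser) \<Rightarrow> ('v ser \<Rightarrow> 'v ser)" where
  "op_add \<delta> \<delta>' = (\<lambda>f. ser_add (\<delta> f) (\<delta>' f))"

definition op_sum :: "('a \<Rightarrow> ('v::comm_ring_1) ser \<Rightarrow> 'v ser) \<Rightarrow> 'a set \<Rightarrow> ('v ser \<Rightarrow> 'v ser)" where
  "op_sum F S = (\<lambda>f \<alpha>. \<Sum>j\<in>S. F j f \<alpha>)"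

definition idop :: "('v::comm_ring_1) ser set \<Rightarrow> 'v ser \<Rightarrow> 'v ser" where
  "idop Rc = (\<lambda>f. if f \<in> Rc then f else ser_zero)"

lemma diff_op_Suc_eq:
  "diff_op Rc (Suc k) \<delta> \<longleftrightarrow> V_linear_op Rc \<delta> \<and> (\<forall>r\<in>Rc. diff_op Rc k (comm Rc \<delta> r))"
  by (simp add: comm_def)

lemma diff_op_Vlin: "diff_op Rc k \<delta> \<Longrightarrow> V_linear_op Rc \<delta>"
  by (cases k) auto

declare diff_op.simps(2)[simp del]

lemma Vlin_ext: "V_linear_op Rc \<delta> \<Longrightarrow> f \<notin> Rc \<Longrightarrow> \<delta> f = ser_zero"
  unfolding V_linear_op_def extensional_op_def by blast

lemma Vlin_in: "V_linear_op Rc \<delta> \<Longrightarrow> f \<in> Rc \<Longrightarrow> \<delta> f \<in> Rc"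
  unfolding V_linear_op_def by blast

lemma Vlin_in_any: "okc n Rc \<Longrightarrow> V_linear_op Rc \<delta> \<Longrightarrow> \<delta> f \<in> Rc"
  by (cases "f \<in> Rc") (auto simp: Vlin_in Vlin_ext zero_in)

lemma Vlin_add: "V_linear_op Rc \<delta> \<Longrightarrow> f \<in> Rc \<Longrightarrow> g \<in> Rc \<Longrightarrow> \<delta> (ser_add f g) = ser_add (\<delta> f) (\<delta> g)"
  unfolding V_linear_op_def by blast

lemma Vlin_scal: "V_linear_op Rc \<delta> \<Longrightarrow> f \<in> Rc \<Longrightarrow> \<delta> (ser_mult (ser_const c) f) = ser_mult (ser_const c) (\<delta> f)"
  unfolding V_linear_op_def by blast

lemma Vlin_zero: "okc n Rc \<Longrightarrow> V_linear_op Rc \<delta> \<Longrightarrow> \<delta> ser_zero = (ser_zero :: ('v::comm_ring_1) ser)"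
proof -
  assume R: "okc n Rc" and V: "V_linear_op Rc \<delta>"
  have z: "ser_zero \<in> Rc" using zero_in[OF R] .
  have "\<delta> (ser_add ser_zero ser_zero) = ser_add (\<delta> ser_zero) (\<delta> ser_zero)" using Vlin_add[OF V z z] .
  moreover have "ser_add ser_zero ser_zero = (ser_zero :: 'v ser)" by (simp add: ser_add_def ser_zero_def)
  ultimately have "\<delta> ser_zero = ser_add (\<delta> ser_zero) (\<delta> ser_zero)" by simp
  hence "\<And>\<alpha>. \<delta> ser_zero \<alpha> = \<delta> ser_zero \<alpha> + \<delta> ser_zero \<alpha>" by (metis ser_add_def)
  then show ?thesis by (simp add: ser_zero_def fun_eq_iff)
qed

lemma Vlin_scal': "okc n Rc \<Longrightarrow> V_linear_op Rc \<delta> \<Longrightarrow> f \<in> Rc \<Longrightarrow> \<delta> (scal c f) = scal c (\<delta> (f::('v::comm_ring_1) ser))"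
proof -
  assume R: "okc n Rc" and V: "V_linear_op Rc \<delta>" and f: "f \<in> Rc"
  have "\<delta> (scal c f) = \<delta> (ser_mult (ser_const c) f)" using mult_const[OF okc_ps[OF R f]] by simp
  also have "\<dots> = ser_mult (ser_const c) (\<delta> f)" using Vlin_scal[OF V f] .
  also have "\<dots> = scal c (\<delta> f)" using mult_const[OF okc_ps[OF R Vlin_in[OF V f]]] .
  finally show ?thesis .
qed

lemma Vlin_intro:
  fixes \<delta> :: "('v::comm_ring_1) ser \<Rightarrow> 'v ser"
  assumes R: "okc n Rc"
    and "\<And>f. f \<notin> Rc \<Longrightarrow> \<delta> f = ser_zero"
    and "\<And>f. f \<in> Rc \<Longrightarrow> \<delta> f \<in> Rc"
    and "\<And>f g. f \<in> Rc \<Longrightarrow> g \<in> Rc \<Longrightarrow> \<delta> (ser_add f g) = ser_add (\<delta> f) (\<delta> g)"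
    and "\<And>f c. f \<in> Rc \<Longrightarrow> \<delta> (scal c f) = scal c (\<delta> f)"
  shows "V_linear_op Rc \<delta>"
  unfolding V_linear_op_def extensional_op_def
proof (intro conjI allI ballI impI)
  fix c f assume f: "f \<in> Rc"
  have "\<delta> (ser_mult (ser_const c) f) = \<delta> (scal c f)" using mult_const[OF okc_ps[OF R f]] by simp
  also have "\<dots> = scal c (\<delta> f)" using assms(5) f .
  also have "\<dots> = ser_mult (ser_const c) (\<delta> f)" using mult_const[OF okc_ps[OF R assms(3)[OF f]]] by simp
  finally show "\<delta> (ser_mult (ser_const c) f) = ser_mult (ser_const c) (\<delta> f)" .
qed (use assms in auto)

lemma add_zero_zero: "ser_add ser_zero ser_zero = (ser_zero::('v::comm_ring_1) ser)"
  by (simp add: ser_add_def ser_zero_def)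

lemma scal_zero: "scal c ser_zero = (ser_zero::('v::comm_ring_1) ser)"
  by (simp add: scal_def ser_zero_def)

lemma zop_diff: "okc n Rc \<Longrightarrow> diff_op Rc k (zop :: ('v::comm_ring_1) ser \<Rightarrow> 'v ser)"
proof (induction k)
  case 0
  have V: "V_linear_op Rc (zop :: 'v ser \<Rightarrow> 'v ser)"
    by (rule Vlin_intro[OF 0]) (auto simp: zop_def zero_in[OF 0] add_zero_zero scal_zero)
  then show ?case by (simp add: zop_def mult_zero_right)
next
  case (Suc k)
  have V: "V_linear_op Rc (zop :: 'v ser \<Rightarrow> 'v ser)"
    by (rule Vlin_intro[OF Suc.prems]) (auto simp: zop_def zero_in[OF Suc.prems] add_zero_zero scal_zero)
  have "comm Rc zop r = zop" for r :: "'v ser"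
    by (auto simp: comm_def zop_def mult_zero_right ser_diff_def fun_eq_iff) (simp add: ser_zero_def)
  then show ?case using V Suc by (simp add: diff_op_Suc_eq)
qed

lemma diff_op_mono: "okc n Rc \<Longrightarrow> diff_op Rc k (\<delta>::('v::comm_ring_1) ser \<Rightarrow> 'v ser) \<Longrightarrow> diff_op Rc (Suc k) \<delta>"
proof (induction k arbitrary: \<delta>)
  case 0
  have "comm Rc \<delta> r = zop" if "r \<in> Rc" for r
    using 0 that by (auto simp: comm_def zop_def ser_diff_def ser_zero_def fun_eq_iff)
  moreover have "V_linear_op Rc \<delta>" using 0(2) by simp
  ultimately show ?case unfolding diff_op_Suc_eq using zop_diff[OF 0(1), of 0] by simp
next
  case (Suc k)
  then show ?case by (simp add: diff_op_Suc_eq)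
qed

lemma diff_op_mono_le: "okc n Rc \<Longrightarrow> diff_op Rc k (\<delta>::('v::comm_ring_1) ser \<Rightarrow> 'v ser) \<Longrightarrow> k \<le> l \<Longrightarrow> diff_op Rc l \<delta>"
proof (induction l)
  case 0 then show ?case by simp
next
  case (Suc l)
  then show ?case using diff_op_mono by (metis le_Suc_eq)
qed

lemma ser_add_ac:
  "ser_add (ser_add a b) (ser_add c d) = ser_add (ser_add a c) (ser_add b (d::('v::comm_ring_1) ser))"
  by (simp add: ser_add_def fun_eq_iff algebra_simps)


lemma diff_op_add:
  assumes R: "okc n Rc"
  shows "diff_op Rc k \<delta> \<Longrightarrow> diff_op Rc k \<delta>' \<Longrightarrow> diff_op Rc k (op_add \<delta> (\<delta>'::('v::comm_ring_1) ser \<Rightarrow> 'v ser))"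
proof (induction k arbitrary: \<delta> \<delta>')
  case 0
  have V: "V_linear_op Rc \<delta>" "V_linear_op Rc \<delta>'" using 0 diff_op_Vlin by blast+
  have VV: "V_linear_op Rc (op_add \<delta> \<delta>')"
  proof (rule Vlin_intro[OF R])
    fix f show "f \<notin> Rc \<Longrightarrow> op_add \<delta> \<delta>' f = ser_zero"
      using V Vlin_ext[of Rc _ f] add_zero_zero unfolding op_add_def by simp
    show "f \<in> Rc \<Longrightarrow> op_add \<delta> \<delta>' f \<in> Rc" by (simp add: op_add_def add_in[OF R] Vlin_in[OF V(1)] Vlin_in[OF V(2)])
  next
    fix f g assume "f \<in> Rc" "g \<in> Rc"
    then show "op_add \<delta> \<delta>' (ser_add f g) = ser_add (op_add \<delta> \<delta>' f) (op_add \<delta> \<delta>' g)"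
      unfolding op_add_def by (simp add: Vlin_add[OF V(1)] Vlin_add[OF V(2)] ser_add_ac)
  next
    fix f c assume "f \<in> Rc"
    then show "op_add \<delta> \<delta>' (scal c f) = scal c (op_add \<delta> \<delta>' f)"
      using V Vlin_scal'[OF R] unfolding op_add_def by (simp add: scal_def ser_add_def distrib_left)
  qed
  show ?case using VV 0 by (simp add: op_add_def mult_add_right)
next
  case (Suc k)
  have V: "V_linear_op Rc \<delta>" "V_linear_op Rc \<delta>'" using Suc.prems diff_op_Vlin by blast+
  have VV: "V_linear_op Rc (op_add \<delta> \<delta>')"
  proof (rule Vlin_intro[OF R])
    fix f show "f \<notin> Rc \<Longrightarrow> op_add \<delta> \<delta>' f = ser_zero"
      using V Vlin_ext[of Rc _ f] add_zero_zero unfolding op_add_def by simp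
    show "f \<in> Rc \<Longrightarrow> op_add \<delta> \<delta>' f \<in> Rc" by (simp add: op_add_def add_in[OF R] Vlin_in[OF V(1)] Vlin_in[OF V(2)])
  next
    fix f g assume "f \<in> Rc" "g \<in> Rc"
    then show "op_add \<delta> \<delta>' (ser_add f g) = ser_add (op_add \<delta> \<delta>' f) (op_add \<delta> \<delta>' g)"
      unfolding op_add_def by (simp add: Vlin_add[OF V(1)] Vlin_add[OF V(2)] ser_add_ac)
  next
    fix f c assume "f \<in> Rc"
    then show "op_add \<delta> \<delta>' (scal c f) = scal c (op_add \<delta> \<delta>' f)"
      using V Vlin_scal'[OF R] unfolding op_add_def by (simp add: scal_def ser_add_def distrib_left)
  qed
  have "comm Rc (op_add \<delta> \<delta>') r = op_add (comm Rc \<delta> r) (comm Rc \<delta>' r)" for r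
  proof (rule ext)
    fix f show "comm Rc (op_add \<delta> \<delta>') r f = op_add (comm Rc \<delta> r) (comm Rc \<delta>' r) f"
      by (cases "f \<in> Rc") (simp_all add: comm_def op_add_def mult_add_right add_zero_zero,
          simp add: ser_add_def ser_diff_def fun_eq_iff algebra_simps)
  qed
  then show ?case using VV Suc by (simp add: diff_op_Suc_eq)
qed

lemma op_sum_empty: "op_sum F {} = zop"
  by (simp add: op_sum_def zop_def ser_zero_def)

lemma op_sum_insert: "finite S \<Longrightarrow> j \<notin> S \<Longrightarrow> op_sum F (insert j S) = op_add (F j) (op_sum F S)"
  by (simp add: op_sum_def op_add_def ser_add_def fun_eq_iff)

lemma diff_op_sum:
  assumes R: "okc n Rc" and S: "finite S"
  shows "(\<And>j. j \<in> S \<Longrightarrow> diff_op Rc k (F j)) \<Longrightarrow> diff_op Rc k (op_sum (F::'a \<Rightarrow> ('v::comm_ring_1) ser \<Rightarrow> 'v ser) S)"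
  using S
proof (induction S rule: finite_induct)
  case empty then show ?case using zop_diff[OF R] by (simp add: op_sum_empty)
next
  case (insert x T)
  then show ?case using diff_op_add[OF R] by (simp add: op_sum_insert)
qed

lemma mult_comm_assoc:
  assumes "a \<in> ps_carrier n" "r \<in> ps_carrier n" "g \<in> ps_carrier n"
  shows "ser_mult a (ser_mult r g) = ser_mult r (ser_mult a (g::('v::comm_ring_1) ser))"
proof -
  have "ser_mult a (ser_mult r g) = ser_mult (ser_mult a r) g" using mult_assoc[OF assms] by simp
  also have "\<dots> = ser_mult (ser_mult r a) g" using mult_comm[of a r] by simp
  also have "\<dots> = ser_mult r (ser_mult a g)" using mult_assoc[OF assms(2,1,3)] by simp
  finally show ?thesis .
qed

lemma diff_op_multcomp:
  assumes R: "okc n Rc" and a: "a \<in> Rc"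
  shows "diff_op Rc k \<delta> \<Longrightarrow> diff_op Rc k (mult_op Rc a \<circ> (\<delta>::('v::comm_ring_1) ser \<Rightarrow> 'v ser))"
proof (induction k arbitrary: \<delta>)
  case 0
  have V: "V_linear_op Rc \<delta>" using 0 diff_op_Vlin by blast
  have VV: "V_linear_op Rc (mult_op Rc a \<circ> \<delta>)"
  proof (rule Vlin_intro[OF R])
    fix f show "f \<notin> Rc \<Longrightarrow> (mult_op Rc a \<circ> \<delta>) f = ser_zero"
      using Vlin_ext[OF V, of f] zero_in[OF R] by (simp add: mult_op_def mult_zero_right)
    show "f \<in> Rc \<Longrightarrow> (mult_op Rc a \<circ> \<delta>) f \<in> Rc" using Vlin_in[OF V] mult_in[OF R a] by (simp add: mult_op_def)
  next
    fix f g assume "f \<in> Rc" "g \<in> Rc"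
    then show "(mult_op Rc a \<circ> \<delta>) (ser_add f g) = ser_add ((mult_op Rc a \<circ> \<delta>) f) ((mult_op Rc a \<circ> \<delta>) g)"
      using Vlin_add[OF V] Vlin_in[OF V] add_in[OF R] by (simp add: mult_op_def mult_add_right)
  next
    fix f c assume "f \<in> Rc"
    then show "(mult_op Rc a \<circ> \<delta>) (scal c f) = scal c ((mult_op Rc a \<circ> \<delta>) f)"
      using Vlin_scal'[OF R V] Vlin_in[OF V] scal_in[OF R] by (simp add: mult_op_def mult_scal_right)
  qed
  have L: "\<forall>r\<in>Rc. \<forall>f\<in>Rc. \<delta> (ser_mult r f) = ser_mult r (\<delta> f)" using 0 by simp
  have "\<delta> (ser_mult r f) = ser_mult r (\<delta> f)" if "r \<in> Rc" "f \<in> Rc" for r f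
    using L that by blast
  moreover have "ser_mult a (ser_mult r (\<delta> f)) = ser_mult r (ser_mult a (\<delta> f))" if "r \<in> Rc" "f \<in> Rc" for r f
    by (rule mult_comm_assoc[OF okc_ps[OF R a] okc_ps[OF R that(1)] okc_ps[OF R Vlin_in[OF V that(2)]]])
  ultimately show ?case unfolding diff_op.simps(1)
  proof (intro conjI VV ballI)
    fix r f assume r: "r \<in> Rc" and f: "f \<in> Rc"
    assume A: "\<And>r f. r \<in> Rc \<Longrightarrow> f \<in> Rc \<Longrightarrow> \<delta> (ser_mult r f) = ser_mult r (\<delta> f)"
      and B: "\<And>r f. r \<in> Rc \<Longrightarrow> f \<in> Rc \<Longrightarrow> ser_mult a (ser_mult r (\<delta> f)) = ser_mult r (ser_mult a (\<delta> f))"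
    show "(mult_op Rc a \<circ> \<delta>) (ser_mult r f) = ser_mult r ((mult_op Rc a \<circ> \<delta>) f)"
      using A[OF r f] B[OF r f] Vlin_in[OF V f] Vlin_in[OF V mult_in[OF R r f]]
      by (simp add: mult_op_def)
  qed
next
  case (Suc k)
  have V: "V_linear_op Rc \<delta>" using Suc.prems diff_op_Vlin by blast
  have VV: "V_linear_op Rc (mult_op Rc a \<circ> \<delta>)"
  proof (rule Vlin_intro[OF R])
    fix f show "f \<notin> Rc \<Longrightarrow> (mult_op Rc a \<circ> \<delta>) f = ser_zero"
      using Vlin_ext[OF V, of f] zero_in[OF R] by (simp add: mult_op_def mult_zero_right)
    show "f \<in> Rc \<Longrightarrow> (mult_op Rc a \<circ> \<delta>) f \<in> Rc" using Vlin_in[OF V] mult_in[OF R a] by (simp add: mult_op_def)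
  next
    fix f g assume "f \<in> Rc" "g \<in> Rc"
    then show "(mult_op Rc a \<circ> \<delta>) (ser_add f g) = ser_add ((mult_op Rc a \<circ> \<delta>) f) ((mult_op Rc a \<circ> \<delta>) g)"
      using Vlin_add[OF V] Vlin_in[OF V] add_in[OF R] by (simp add: mult_op_def mult_add_right)
  next
    fix f c assume "f \<in> Rc"
    then show "(mult_op Rc a \<circ> \<delta>) (scal c f) = scal c ((mult_op Rc a \<circ> \<delta>) f)"
      using Vlin_scal'[OF R V] Vlin_in[OF V] scal_in[OF R] by (simp add: mult_op_def mult_scal_right)
  qed
  have "comm Rc (mult_op Rc a \<circ> \<delta>) r = mult_op Rc a \<circ> comm Rc \<delta> r" if r: "r \<in> Rc" for r
  proof (rule ext)
    fix f show "comm Rc (mult_op Rc a \<circ> \<delta>) r f = (mult_op Rc a \<circ> comm Rc \<delta> r) f"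
    proof (cases "f \<in> Rc")
      case True
      have i1: "\<delta> (ser_mult r f) \<in> Rc" using Vlin_in[OF V] mult_in[OF R r True] .
      have i2: "ser_mult r (\<delta> f) \<in> Rc" using mult_in[OF R r Vlin_in[OF V True]] .
      have "ser_mult a (ser_mult r (\<delta> f)) = ser_mult r (ser_mult a (\<delta> f))"
        by (rule mult_comm_assoc[OF okc_ps[OF R a] okc_ps[OF R r] okc_ps[OF R Vlin_in[OF V True]]])
      then show ?thesis using True i1 i2 diff_in[OF R i1 i2] Vlin_in[OF V True] mult_in[OF R a]
        by (simp add: comm_def mult_op_def mult_diff_right)
    next
      case False
      then show ?thesis using zero_in[OF R] by (simp add: comm_def mult_op_def mult_zero_right)
    qed
  qed
  note eq = this
  show ?case unfolding diff_op_Suc_eq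
  proof (intro conjI VV ballI)
    fix r assume r: "r \<in> Rc"
    have "diff_op Rc k (comm Rc \<delta> r)" using Suc.prems r by (simp add: diff_op_Suc_eq)
    then have "diff_op Rc k (mult_op Rc a \<circ> comm Rc \<delta> r)" by (rule Suc.IH)
    then show "diff_op Rc k (comm Rc (mult_op Rc a \<circ> \<delta>) r)" by (simp only: eq[OF r])
  qed
qed

lemma idop_diff: "okc n Rc \<Longrightarrow> diff_op Rc 0 (idop Rc :: ('v::comm_ring_1) ser \<Rightarrow> 'v ser)"
proof -
  assume R: "okc n Rc"
  have "V_linear_op Rc (idop Rc :: 'v ser \<Rightarrow> 'v ser)"
    by (rule Vlin_intro[OF R]) (auto simp: idop_def add_in[OF R] scal_in[OF R])
  then show ?thesis using mult_in[OF R] by (simp add: idop_def)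
qed

lemma mult_op_comp_id: "okc n Rc \<Longrightarrow> mult_op Rc a = mult_op Rc a \<circ> idop Rc"
  by (auto simp: mult_op_def idop_def fun_eq_iff zero_in mult_zero_right)

lemma mult_op_diff: "okc n Rc \<Longrightarrow> a \<in> Rc \<Longrightarrow> diff_op Rc 0 (mult_op Rc (a::('v::comm_ring_1) ser))"
  using diff_op_multcomp[OF _ _ idop_diff, of n Rc a] mult_op_comp_id[of n Rc a] by simp

definition Dc :: "nat \<Rightarrow> nat \<Rightarrow> ('v::comm_ring_1) ser \<Rightarrow> 'v ser" where
  "Dc i k f = (\<lambda>\<alpha>. of_nat ((\<alpha> i + k) choose k) * f (\<alpha>(i := \<alpha> i + k)))"

definition Dop :: "('v::comm_ring_1) ser set \<Rightarrow> nat \<Rightarrow> nat \<Rightarrow> 'v ser \<Rightarrow> 'v ser" where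
  "Dop Rc i k = (\<lambda>f. if f \<in> Rc then Dc i k f else ser_zero)"

lemma upd_inj: "inj (\<lambda>\<alpha>::nat\<Rightarrow>nat. \<alpha>(i := \<alpha> i + k))"
proof (rule injI)
  fix a b :: "nat \<Rightarrow> nat" assume h: "a(i := a i + k) = b(i := b i + k)"
  show "a = b"
  proof (rule ext)
    fix l show "a l = b l"
      using fun_cong[OF h, of l] by (cases "l = i") auto
  qed
qed

lemma Dc_in:
  assumes R: "okc n Rc" and i: "i < n" and f: "f \<in> Rc"
  shows "Dc i k f \<in> Rc"
proof -
  have ps: "Dc i k f \<in> ps_carrier n"
    unfolding ps_carrier_def
  proof (intro CollectI allI impI)
    fix \<alpha> assume a: "\<alpha> \<notin> multi_idx n"
    have "\<alpha>(i := \<alpha> i + k) \<notin> multi_idx n" using a i unfolding multi_idx_def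
      by (auto split: if_splits)
    then show "Dc i k f \<alpha> = 0" using okc_out[OF R f] by (simp add: Dc_def)
  qed
  show ?thesis
  proof (cases "Rc = ps_carrier n")
    case True then show ?thesis using ps by simp
  next
    case False
    hence P: "Rc = poly_carrier n" using R okc_def by blast
    have "{\<alpha>. Dc i k f \<alpha> \<noteq> 0} \<subseteq> (\<lambda>\<alpha>. \<alpha>(i := \<alpha> i + k)) -` {\<beta>. f \<beta> \<noteq> 0}"
      by (auto simp: Dc_def)
    moreover have "finite ((\<lambda>\<alpha>. \<alpha>(i := \<alpha> i + k)) -` {\<beta>. f \<beta> \<noteq> 0})"
      by (rule finite_vimageI) (use f P upd_inj in \<open>auto simp: poly_carrier_def\<close>)
    ultimately have "finite {\<alpha>. Dc i k f \<alpha> \<noteq> 0}" using finite_subset by blast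
    then show ?thesis using P ps unfolding poly_carrier_def by blast
  qed
qed

lemma Dc_0: "Dc i 0 f = f"
  by (simp add: Dc_def)

lemma Dc_add: "Dc i k (ser_add f g) = ser_add (Dc i k f) (Dc i k (g::('v::comm_ring_1) ser))"
  by (simp add: Dc_def ser_add_def fun_eq_iff distrib_left)

lemma Dc_scal: "Dc i k (scal c f) = scal c (Dc i k (f::('v::comm_ring_1) ser))"
  by (simp add: Dc_def scal_def fun_eq_iff mult_ac)

lemma Dc_zero: "Dc i k ser_zero = (ser_zero::('v::comm_ring_1) ser)"
  by (simp add: Dc_def ser_zero_def fun_eq_iff)

lemma leib_term:
  fixes f g :: "('v::comm_ring_1) ser"
  assumes a: "\<alpha> \<in> multi_idx n" and i: "i < n" and j: "j \<le> k"
  defines "e \<equiv> \<alpha>(i := \<alpha> i + k)"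
  shows "ser_mult (Dc i j f) (Dc i (k - j) g) \<alpha> =
    (\<Sum>\<beta>\<in>{\<beta>. \<beta> \<le> e}. of_nat ((\<beta> i choose j) * ((e i - \<beta> i) choose (k - j))) * (f \<beta> * g (\<lambda>l. e l - \<beta> l)))"
proof -
  define Y where "Y = (\<lambda>\<beta>. of_nat ((\<beta> i choose j) * ((e i - \<beta> i) choose (k - j))) * (f \<beta> * g (\<lambda>l. e l - \<beta> l)))"
  define \<phi> where "\<phi> = (\<lambda>\<delta>::nat\<Rightarrow>nat. \<delta>(i := \<delta> i + j))"
  have ei: "e i = \<alpha> i + k" by (simp add: e_def)
  have "ser_mult (Dc i j f) (Dc i (k - j) g) \<alpha> = (\<Sum>\<delta>\<in>{\<delta>. \<delta> \<le> \<alpha>}. Y (\<phi> \<delta>))"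
    unfolding ser_mult_def
  proof (rule sum.cong[OF refl])
    fix \<delta> assume "\<delta> \<in> {\<delta>. \<delta> \<le> \<alpha>}"
    hence d: "\<delta> i \<le> \<alpha> i" by (simp add: le_fun_def)
    have e1: "e i - (\<delta> i + j) = \<alpha> i - \<delta> i + (k - j)" using d j ei by simp
    have e2: "(\<lambda>l. \<alpha> l - \<delta> l)(i := \<alpha> i - \<delta> i + (k - j)) = (\<lambda>l. e l - \<phi> \<delta> l)"
      using e1 by (auto simp: fun_eq_iff \<phi>_def e_def)
    show "Dc i j f \<delta> * Dc i (k - j) g (\<lambda>l. \<alpha> l - \<delta> l) = Y (\<phi> \<delta>)"
      unfolding Dc_def Y_def using e1 e2 by (simp add: \<phi>_def mult_ac)
  qed
  also have "\<dots> = (\<Sum>\<beta>\<in>\<phi> ` {\<delta>. \<delta> \<le> \<alpha>}. Y \<beta>)"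
  proof (rule sum.reindex[symmetric, unfolded comp_def])
    show "inj_on \<phi> {\<delta>. \<delta> \<le> \<alpha>}" unfolding \<phi>_def using upd_inj[of i j] inj_on_subset by blast
  qed
  also have "\<dots> = (\<Sum>\<beta>\<in>{\<beta>. \<beta> \<le> e}. Y \<beta>)"
  proof (rule sum.mono_neutral_left)
    show "finite {\<beta>. \<beta> \<le> e}" using finite_le multi_idx_upd[OF a i] e_def by metis
    show "\<phi> ` {\<delta>. \<delta> \<le> \<alpha>} \<subseteq> {\<beta>. \<beta> \<le> e}"
      using j by (auto simp: \<phi>_def e_def le_fun_def add_mono)
    show "\<forall>\<beta>\<in>{\<beta>. \<beta> \<le> e} - \<phi> ` {\<delta>. \<delta> \<le> \<alpha>}. Y \<beta> = 0"
    proof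
      fix \<beta> assume b: "\<beta> \<in> {\<beta>. \<beta> \<le> e} - \<phi> ` {\<delta>. \<delta> \<le> \<alpha>}"
      have ble: "\<And>l. \<beta> l \<le> e l" using b by (simp add: le_fun_def)
      show "Y \<beta> = 0"
      proof (cases "j \<le> \<beta> i \<and> \<beta> i \<le> \<alpha> i + j")
        case True
        have "\<beta>(i := \<beta> i - j) \<le> \<alpha>"
          unfolding le_fun_def
        proof
          fix l show "(\<beta>(i := \<beta> i - j)) l \<le> \<alpha> l"
          proof (cases "l = i")
            case True then show ?thesis using \<open>j \<le> \<beta> i \<and> \<beta> i \<le> \<alpha> i + j\<close> by (simp, linarith)
          next
            case False then show ?thesis using ble[of l] by (simp add: e_def)
          qed
        qed
        moreover have "\<phi> (\<beta>(i := \<beta> i - j)) = \<beta>" using True by (auto simp: \<phi>_def fun_eq_iff)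
        ultimately have "\<beta> \<in> \<phi> ` {\<delta>. \<delta> \<le> \<alpha>}" by (intro image_eqI[where x="\<beta>(i := \<beta> i - j)"]) auto
        then show ?thesis using b by blast
      next
        case False
        then consider "\<beta> i < j" | "\<beta> i > \<alpha> i + j" by linarith
        then show ?thesis
        proof cases
          case 1 then show ?thesis by (simp add: Y_def binomial_eq_0)
        next
          case 2
          hence "e i - \<beta> i < k - j" using ei j ble[of i] by linarith
          then show ?thesis by (simp add: Y_def binomial_eq_0)
        qed
      qed
    qed
  qed
  finally show ?thesis unfolding Y_def .
qed

lemma leibniz:
  fixes f g :: "('v::comm_ring_1) ser"
  assumes a: "\<alpha> \<in> multi_idx n" and i: "i < n"
  shows "Dc i k (ser_mult f g) \<alpha> = (\<Sum>j\<le>k. ser_mult (Dc i j f) (Dc i (k - j) g) \<alpha>)"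
proof -
  define e where "e = \<alpha>(i := \<alpha> i + k)"
  have ei: "e i = \<alpha> i + k" by (simp add: e_def)
  have "(\<Sum>j\<le>k. ser_mult (Dc i j f) (Dc i (k - j) g) \<alpha>) =
     (\<Sum>j\<le>k. \<Sum>\<beta>\<in>{\<beta>. \<beta> \<le> e}. of_nat ((\<beta> i choose j) * ((e i - \<beta> i) choose (k - j))) * (f \<beta> * g (\<lambda>l. e l - \<beta> l)))"
  proof (rule sum.cong[OF refl])
    fix j assume "j \<in> {..k}"
    then show "ser_mult (Dc i j f) (Dc i (k - j) g) \<alpha> =
     (\<Sum>\<beta>\<in>{\<beta>. \<beta> \<le> e}. of_nat ((\<beta> i choose j) * ((e i - \<beta> i) choose (k - j))) * (f \<beta> * g (\<lambda>l. e l - \<beta> l)))"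
      using leib_term[OF a i, of j k f g] unfolding e_def by simp
  qed
  also have "\<dots> = (\<Sum>\<beta>\<in>{\<beta>. \<beta> \<le> e}. \<Sum>j\<le>k. of_nat ((\<beta> i choose j) * ((e i - \<beta> i) choose (k - j))) * (f \<beta> * g (\<lambda>l. e l - \<beta> l)))"
    by (rule sum.swap)
  also have "\<dots> = (\<Sum>\<beta>\<in>{\<beta>. \<beta> \<le> e}. of_nat ((e i) choose k) * (f \<beta> * g (\<lambda>l. e l - \<beta> l)))"
  proof (rule sum.cong[OF refl])
    fix \<beta> assume "\<beta> \<in> {\<beta>. \<beta> \<le> e}"
    hence b: "\<beta> i \<le> e i" by (simp add: le_fun_def)
    have "(\<Sum>j\<le>k. of_nat ((\<beta> i choose j) * ((e i - \<beta> i) choose (k - j))) * (f \<beta> * g (\<lambda>l. e l - \<beta> l)))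
        = of_nat (\<Sum>j\<le>k. (\<beta> i choose j) * ((e i - \<beta> i) choose (k - j))) * (f \<beta> * g (\<lambda>l. e l - \<beta> l))"
      by (simp add: sum_distrib_right)
    also have "(\<Sum>j\<le>k. (\<beta> i choose j) * ((e i - \<beta> i) choose (k - j))) = (\<beta> i + (e i - \<beta> i)) choose k"
      by (rule vandermonde)
    also have "\<beta> i + (e i - \<beta> i) = e i" using b by simp
    finally show "(\<Sum>j\<le>k. of_nat ((\<beta> i choose j) * ((e i - \<beta> i) choose (k - j))) * (f \<beta> * g (\<lambda>l. e l - \<beta> l)))
        = of_nat ((e i) choose k) * (f \<beta> * g (\<lambda>l. e l - \<beta> l))" .
  qed
  also have "\<dots> = Dc i k (ser_mult f g) \<alpha>"
    unfolding Dc_def ser_mult_def e_def[symmetric] ei by (simp add: sum_distrib_left)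
  finally show ?thesis by simp
qed

lemma Dop_V: "okc n Rc \<Longrightarrow> i < n \<Longrightarrow> V_linear_op Rc (Dop Rc i k :: ('v::comm_ring_1) ser \<Rightarrow> 'v ser)"
proof -
  assume R: "okc n Rc" and i: "i < n"
  show ?thesis
    by (rule Vlin_intro[OF R]) (auto simp: Dop_def Dc_in[OF R i] add_in[OF R] scal_in[OF R] Dc_add Dc_scal)
qed

lemma Dop_0: "Dop Rc i 0 = idop Rc"
  unfolding Dop_def idop_def Dc_0 by simp

lemma Dop_in: "okc n Rc \<Longrightarrow> i < n \<Longrightarrow> Dop Rc i k (f::('v::comm_ring_1) ser) \<in> Rc"
  by (simp add: Dop_def Dc_in zero_in)

lemma Dop_leib:
  fixes r :: "('v::comm_ring_1) ser"
  assumes R: "okc n Rc" and i: "i < n" and r: "r \<in> Rc"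
  shows "Dop Rc i k \<circ> mult_op Rc r = op_sum (\<lambda>j. mult_op Rc (Dop Rc i j r) \<circ> Dop Rc i (k - j)) {..k}"
proof (rule ext)
  fix f
  show "(Dop Rc i k \<circ> mult_op Rc r) f = op_sum (\<lambda>j. mult_op Rc (Dop Rc i j r) \<circ> Dop Rc i (k - j)) {..k} f"
  proof (cases "f \<in> Rc")
    case True
    have L: "(Dop Rc i k \<circ> mult_op Rc r) f = Dc i k (ser_mult r f)"
      using True mult_in[OF R r True] by (simp add: Dop_def mult_op_def)
    have Rr: "op_sum (\<lambda>j. mult_op Rc (Dop Rc i j r) \<circ> Dop Rc i (k - j)) {..k} f
        = (\<lambda>\<alpha>. \<Sum>j\<le>k. ser_mult (Dc i j r) (Dc i (k - j) f) \<alpha>)"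
      using True r Dc_in[OF R i] by (simp add: op_sum_def Dop_def mult_op_def)
    have P1: "Dc i k (ser_mult r f) \<in> ps_carrier n"
      using Dc_in[OF okc_ps_self i mult_in[OF okc_ps_self okc_ps[OF R r] okc_ps[OF R True]]] .
    have P2: "(\<lambda>\<alpha>. \<Sum>j\<le>k. ser_mult (Dc i j r) (Dc i (k - j) f) \<alpha>) \<in> ps_carrier n"
      by (rule sum_in[OF okc_ps_self]) (auto intro!: mult_in[OF okc_ps_self] Dc_in[OF okc_ps_self i] okc_ps[OF R r] okc_ps[OF R True])
    show ?thesis unfolding L Rr
      by (rule ps_eqI[OF P1 P2]) (rule leibniz[OF _ i])
  next
    case False
    have L: "(Dop Rc i k \<circ> mult_op Rc r) f = ser_zero"
      using False zero_in[OF R] by (simp add: Dop_def mult_op_def Dc_zero)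
    have "op_sum (\<lambda>j. mult_op Rc (Dop Rc i j r) \<circ> Dop Rc i (k - j)) {..k} f = ser_zero"
      using False zero_in[OF R] by (simp add: op_sum_def Dop_def mult_op_def mult_zero_right) (simp add: ser_zero_def)
    then show ?thesis using L by simp
  qed
qed

lemma Dop_comm:
  fixes r :: "('v::comm_ring_1) ser"
  assumes R: "okc n Rc" and i: "i < n" and r: "r \<in> Rc"
  shows "comm Rc (Dop Rc i (Suc k)) r = op_sum (\<lambda>j. mult_op Rc (Dop Rc i j r) \<circ> Dop Rc i (Suc k - j)) {1..Suc k}"
proof (rule ext)
  fix f
  have split: "{..Suc k} = insert 0 {1..Suc k}" by auto
  show "comm Rc (Dop Rc i (Suc k)) r f = op_sum (\<lambda>j. mult_op Rc (Dop Rc i j r) \<circ> Dop Rc i (Suc k - j)) {1..Suc k} f"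
  proof (cases "f \<in> Rc")
    case True
    have "Dop Rc i (Suc k) (ser_mult r f) = (Dop Rc i (Suc k) \<circ> mult_op Rc r) f"
      using True by (simp add: mult_op_def)
    also have "\<dots> = op_sum (\<lambda>j. mult_op Rc (Dop Rc i j r) \<circ> Dop Rc i (Suc k - j)) {..Suc k} f"
      using Dop_leib[OF R i r] by simp
    also have "\<dots> = ser_add ((mult_op Rc (Dop Rc i 0 r) \<circ> Dop Rc i (Suc k)) f)
        (op_sum (\<lambda>j. mult_op Rc (Dop Rc i j r) \<circ> Dop Rc i (Suc k - j)) {1..Suc k} f)"
      unfolding split by (simp add: op_sum_insert op_add_def)
    also have "(mult_op Rc (Dop Rc i 0 r) \<circ> Dop Rc i (Suc k)) f = ser_mult r (Dop Rc i (Suc k) f)"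
      using r Dop_in[OF R i] by (simp add: Dop_0 idop_def mult_op_def)
    finally show ?thesis using True
      by (simp add: comm_def ser_diff_def ser_add_def fun_eq_iff comp_def)
  next
    case False
    have "op_sum (\<lambda>j. mult_op Rc (Dop Rc i j r) \<circ> Dop Rc i (Suc k - j)) {1..Suc k} f = ser_zero"
      using False zero_in[OF R] by (simp add: op_sum_def Dop_def mult_op_def mult_zero_right) (simp add: ser_zero_def)
    then show ?thesis using False by (simp add: comm_def)
  qed
qed

lemma Dop_diff:
  assumes R: "okc n Rc" and i: "i < n"
  shows "diff_op Rc k (Dop Rc i k :: ('v::comm_ring_1) ser \<Rightarrow> 'v ser)"
proof (induction k rule: less_induct)
  case (less k)
  show ?case
  proof (cases k)
    case 0
    then show ?thesis using idop_diff[OF R] by (simp add: Dop_0)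
  next
    case (Suc k')
    have "diff_op Rc k' (comm Rc (Dop Rc i (Suc k')) r)" if r: "r \<in> Rc" for r
    proof -
      have "diff_op Rc k' (op_sum (\<lambda>j. mult_op Rc (Dop Rc i j r) \<circ> Dop Rc i (Suc k' - j)) {1..Suc k'})"
      proof (rule diff_op_sum[OF R])
        fix j assume j: "j \<in> {1..Suc k'}"
        have "diff_op Rc (Suc k' - j) (Dop Rc i (Suc k' - j) :: 'v ser \<Rightarrow> 'v ser)"
          using less.IH[of "Suc k' - j"] j Suc by simp
        hence "diff_op Rc (Suc k' - j) (mult_op Rc (Dop Rc i j r) \<circ> Dop Rc i (Suc k' - j))"
          by (rule diff_op_multcomp[OF R Dop_in[OF R i]])
        then show "diff_op Rc k' (mult_op Rc (Dop Rc i j r) \<circ> Dop Rc i (Suc k' - j))"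
          by (rule diff_op_mono_le[OF R]) (use j in auto)
      qed simp
      then show ?thesis using Dop_comm[OF R i r] by simp
    qed
    then show ?thesis using Suc Dop_V[OF R i] by (simp add: diff_op_Suc_eq)
  qed
qed

lemma in_ops: "diff_op Rc k \<delta> \<Longrightarrow> \<delta> \<in> diff_ops Rc"
  unfolding diff_ops_def by blast

lemma act_vec_zero:
  fixes act :: "('v::comm_ring_1 ser \<Rightarrow> 'v ser) \<Rightarrow> 'm::ab_group_add \<Rightarrow> 'm"
  assumes M: "D_module Rc act" and d: "\<delta> \<in> diff_ops Rc"
  shows "act \<delta> 0 = 0"
proof -
  have "act \<delta> (0 + 0) = act \<delta> 0 + act \<delta> 0" using M d unfolding D_module_def by blast
  then show ?thesis by simp
qed

lemma act_zop:
  fixes act :: "('v::comm_ring_1 ser \<Rightarrow> 'v ser) \<Rightarrow> 'm::ab_group_add \<Rightarrow> 'm"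
  assumes R: "okc n Rc" and M: "D_module Rc act"
  shows "act zop m = 0"
proof -
  have z: "zop \<in> diff_ops Rc" using in_ops[OF zop_diff[OF R, of 0]] .
  have "act (\<lambda>f. ser_add (zop f) (zop f)) m = act zop m + act zop m"
    using M z unfolding D_module_def by blast
  moreover have "(\<lambda>f. ser_add (zop f) (zop f)) = (zop :: 'v ser \<Rightarrow> 'v ser)"
    by (simp add: zop_def add_zero_zero)
  ultimately show ?thesis by simp
qed

lemma act_sum:
  fixes act :: "('v::comm_ring_1 ser \<Rightarrow> 'v ser) \<Rightarrow> 'm::ab_group_add \<Rightarrow> 'm"
  assumes R: "okc n Rc" and M: "D_module Rc act" and S: "finite S"
  shows "(\<And>j. j \<in> S \<Longrightarrow> diff_op Rc K (F j)) \<Longrightarrow> act (op_sum F S) m = (\<Sum>j\<in>S. act (F j) m)"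
  using S
proof (induction S rule: finite_induct)
  case empty then show ?case using act_zop[OF R M] by (simp add: op_sum_empty)
next
  case (insert x T)
  have d1: "F x \<in> diff_ops Rc" using insert.prems by (intro in_ops) auto
  have d2: "op_sum F T \<in> diff_ops Rc" using insert.prems by (intro in_ops diff_op_sum[OF R insert.hyps(1)]) auto
  have "act (op_sum F (insert x T)) m = act (op_add (F x) (op_sum F T)) m"
    by (simp add: op_sum_insert insert.hyps)
  also have "\<dots> = act (F x) m + act (op_sum F T) m"
    using M d1 d2 unfolding D_module_def op_add_def by blast
  finally show ?case using insert by simp
qed

lemma act_comp:
  fixes act :: "('v::comm_ring_1 ser \<Rightarrow> 'v ser) \<Rightarrow> 'm::ab_group_add \<Rightarrow> 'm"
  assumes M: "D_module Rc act" and "\<delta> \<in> diff_ops Rc" "\<delta>' \<in> diff_ops Rc"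
  shows "act (\<delta> \<circ> \<delta>') m = act \<delta> (act \<delta>' m)"
  using assms unfolding D_module_def by blast

lemma act_id:
  fixes act :: "('v::comm_ring_1 ser \<Rightarrow> 'v ser) \<Rightarrow> 'm::ab_group_add \<Rightarrow> 'm"
  assumes M: "D_module Rc act"
  shows "act (idop Rc) m = m"
  using assms unfolding D_module_def idop_def by blast

lemma ann_mult:
  fixes act :: "('v::comm_ring_1 ser \<Rightarrow> 'v ser) \<Rightarrow> 'm::ab_group_add \<Rightarrow> 'm"
  assumes R: "okc n Rc" and M: "D_module Rc act" and a: "a \<in> Rc" and r: "r \<in> ann_R Rc act"
  shows "ser_mult a r \<in> ann_R Rc act"
proof -
  have rR: "r \<in> Rc" using r unfolding ann_R_def by blast
  have eq: "mult_op Rc (ser_mult a r) = mult_op Rc a \<circ> mult_op Rc r"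
  proof (rule ext)
    fix f show "mult_op Rc (ser_mult a r) f = (mult_op Rc a \<circ> mult_op Rc r) f"
      using mult_assoc[OF okc_ps[OF R a] okc_ps[OF R rR], of f] okc_ps[OF R] mult_in[OF R rR] zero_in[OF R]
      by (cases "f \<in> Rc") (simp_all add: mult_op_def mult_zero_right)
  qed
  have "act (mult_op Rc (ser_mult a r)) m = 0" for m
  proof -
    have "act (mult_op Rc (ser_mult a r)) m = act (mult_op Rc a) (act (mult_op Rc r) m)"
      unfolding eq by (rule act_comp[OF M in_ops[OF mult_op_diff[OF R a]] in_ops[OF mult_op_diff[OF R rR]]])
    also have "act (mult_op Rc r) m = 0" using r unfolding ann_R_def by blast
    finally show ?thesis using act_vec_zero[OF M in_ops[OF mult_op_diff[OF R a]]] by simp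
  qed
  then show ?thesis using mult_in[OF R a rR] unfolding ann_R_def by blast
qed

lemma ann_add:
  fixes act :: "('v::comm_ring_1 ser \<Rightarrow> 'v ser) \<Rightarrow> 'm::ab_group_add \<Rightarrow> 'm"
  assumes R: "okc n Rc" and M: "D_module Rc act" and r: "r \<in> ann_R Rc act" and s: "s \<in> ann_R Rc act"
  shows "ser_add r s \<in> ann_R Rc act"
proof -
  have rR: "r \<in> Rc" and sR: "s \<in> Rc" using r s unfolding ann_R_def by blast+
  have eq: "mult_op Rc (ser_add r s) = (\<lambda>f. ser_add (mult_op Rc r f) (mult_op Rc s f))"
    by (auto simp: mult_op_def mult_add_left add_zero_zero fun_eq_iff)
  have "act (mult_op Rc (ser_add r s)) m = 0" for m
  proof -
    have "act (mult_op Rc (ser_add r s)) m = act (mult_op Rc r) m + act (mult_op Rc s) m"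
      unfolding eq using M in_ops[OF mult_op_diff[OF R rR]] in_ops[OF mult_op_diff[OF R sR]]
      unfolding D_module_def by blast
    then show ?thesis using r s unfolding ann_R_def by simp
  qed
  then show ?thesis using add_in[OF R rR sR] unfolding ann_R_def by blast
qed

lemma one_ann:
  fixes act :: "('v::comm_ring_1 ser \<Rightarrow> 'v ser) \<Rightarrow> 'm::ab_group_add \<Rightarrow> 'm"
  assumes R: "okc n Rc" and M: "D_module Rc act" and o: "ser_const 1 \<in> ann_R Rc act"
  shows "(m::'m) = 0"
proof -
  have "mult_op Rc (ser_const 1) = idop Rc"
  proof (rule ext)
    fix f show "mult_op Rc (ser_const 1) f = idop Rc f"
      using mult_const[OF okc_ps[OF R], of f 1] by (simp add: mult_op_def idop_def scal_def)
  qed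
  then show ?thesis using o act_id[OF M, of m] unfolding ann_R_def by simp
qed

lemma ann_stable:
  fixes act :: "('v::comm_ring_1 ser \<Rightarrow> 'v ser) \<Rightarrow> 'm::ab_group_add \<Rightarrow> 'm"
  assumes R: "okc n Rc" and M: "D_module Rc act" and i: "i < n"
  shows "r \<in> ann_R Rc act \<Longrightarrow> Dop Rc i k r \<in> ann_R Rc act"
proof (induction k rule: less_induct)
  case (less k)
  have rR: "r \<in> Rc" using less.prems unfolding ann_R_def by blast
  let ?F = "\<lambda>j. mult_op Rc (Dop Rc i j r) \<circ> Dop Rc i (k - j)"
  have Fd: "diff_op Rc k (?F j)" if "j \<in> {..k}" for j
    by (rule diff_op_mono_le[OF R diff_op_multcomp[OF R Dop_in[OF R i] Dop_diff[OF R i]]]) simp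
  have "act (mult_op Rc (Dop Rc i k r)) m = 0" for m
  proof -
    have "0 = act (Dop Rc i k) (act (mult_op Rc r) m)"
      using less.prems act_vec_zero[OF M in_ops[OF Dop_diff[OF R i]]] unfolding ann_R_def by simp
    also have "\<dots> = act (Dop Rc i k \<circ> mult_op Rc r) m"
      by (rule act_comp[symmetric, OF M in_ops[OF Dop_diff[OF R i]] in_ops[OF mult_op_diff[OF R rR]]])
    also have "\<dots> = act (op_sum ?F {..k}) m" using Dop_leib[OF R i rR] by simp
    also have "\<dots> = (\<Sum>j\<le>k. act (?F j) m)" by (rule act_sum[OF R M _ Fd]) simp
    also have "\<dots> = (\<Sum>j\<le>k. act (mult_op Rc (Dop Rc i j r)) (act (Dop Rc i (k - j)) m))"
      by (rule sum.cong[OF refl], rule act_comp[OF M in_ops[OF mult_op_diff[OF R Dop_in[OF R i]]] in_ops[OF Dop_diff[OF R i]]])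
    also have "\<dots> = act (mult_op Rc (Dop Rc i k r)) (act (Dop Rc i (k - k)) m) +
        (\<Sum>j<k. act (mult_op Rc (Dop Rc i j r)) (act (Dop Rc i (k - j)) m))"
      by (simp add: lessThan_Suc_atMost[symmetric] add.commute)
    also have "(\<Sum>j<k. act (mult_op Rc (Dop Rc i j r)) (act (Dop Rc i (k - j)) m)) = 0"
    proof (rule sum.neutral, intro ballI)
      fix j assume "j \<in> {..<k}"
      then have "Dop Rc i j r \<in> ann_R Rc act" using less.IH less.prems by simp
      then show "act (mult_op Rc (Dop Rc i j r)) (act (Dop Rc i (k - j)) m) = 0"
        unfolding ann_R_def by blast
    qed
    also have "act (Dop Rc i (k - k)) m = m" using act_id[OF M] by (simp add: Dop_0)
    finally show ?thesis by simp
  qed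
  then show ?case using Dop_in[OF R i] unfolding ann_R_def by blast
qed

lemma iterD:
  fixes act :: "('v::comm_ring_1 ser \<Rightarrow> 'v ser) \<Rightarrow> 'm::ab_group_add \<Rightarrow> 'm"
  assumes R: "okc n Rc" and M: "D_module Rc act" and r: "r \<in> ann_R Rc act"
  shows "m \<le> n \<Longrightarrow> \<exists>s\<in>ann_R Rc act. \<forall>\<beta>\<in>multi_idx n.
     s \<beta> = of_nat (\<Prod>i<m. (\<beta> i + \<alpha> i) choose (\<alpha> i)) * r (\<lambda>i. \<beta> i + (if i < m then \<alpha> i else 0))"
proof (induction m)
  case 0
  then show ?case using r by (intro bexI[of _ r]) auto
next
  case (Suc m)
  then obtain s where s: "s \<in> ann_R Rc act" and sf: "\<forall>\<beta>\<in>multi_idx n.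
     s \<beta> = of_nat (\<Prod>i<m. (\<beta> i + \<alpha> i) choose (\<alpha> i)) * r (\<lambda>i. \<beta> i + (if i < m then \<alpha> i else 0))"
    by auto
  have mn: "m < n" using Suc.prems by simp
  have sR: "s \<in> Rc" using s unfolding ann_R_def by blast
  show ?case
  proof (intro bexI[of _ "Dop Rc m (\<alpha> m) s"] ballI)
    show "Dop Rc m (\<alpha> m) s \<in> ann_R Rc act" by (rule ann_stable[OF R M mn s])
    fix \<beta> assume b: "\<beta> \<in> multi_idx n"
    have b': "\<beta>(m := \<beta> m + \<alpha> m) \<in> multi_idx n" using multi_idx_upd[OF b mn] .
    have p: "(\<Prod>i<m. ((\<beta>(m := \<beta> m + \<alpha> m)) i + \<alpha> i) choose (\<alpha> i)) = (\<Prod>i<m. (\<beta> i + \<alpha> i) choose (\<alpha> i))"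
      by (rule prod.cong) auto
    have q: "(\<lambda>i. (\<beta>(m := \<beta> m + \<alpha> m)) i + (if i < m then \<alpha> i else 0)) = (\<lambda>i. \<beta> i + (if i < Suc m then \<alpha> i else 0))"
      by (auto simp: fun_eq_iff less_Suc_eq)
    have "Dop Rc m (\<alpha> m) s \<beta> = of_nat ((\<beta> m + \<alpha> m) choose (\<alpha> m)) * s (\<beta>(m := \<beta> m + \<alpha> m))"
      using sR by (simp add: Dop_def Dc_def)
    also have "\<dots> = of_nat ((\<beta> m + \<alpha> m) choose (\<alpha> m)) * (of_nat (\<Prod>i<m. (\<beta> i + \<alpha> i) choose (\<alpha> i)) * r (\<lambda>i. \<beta> i + (if i < Suc m then \<alpha> i else 0)))"
      using sf b' p q by simp
    also have "\<dots> = of_nat (\<Prod>i<Suc m. (\<beta> i + \<alpha> i) choose (\<alpha> i)) * r (\<lambda>i. \<beta> i + (if i < Suc m then \<alpha> i else 0))"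
      by (simp add: mult_ac)
    finally show "Dop Rc m (\<alpha> m) s \<beta> = of_nat (\<Prod>i<Suc m. (\<beta> i + \<alpha> i) choose (\<alpha> i)) * r (\<lambda>i. \<beta> i + (if i < Suc m then \<alpha> i else 0))" .
  qed
qed

lemma iterD_full:
  fixes act :: "('v::comm_ring_1 ser \<Rightarrow> 'v ser) \<Rightarrow> 'm::ab_group_add \<Rightarrow> 'm"
  assumes R: "okc n Rc" and M: "D_module Rc act" and r: "r \<in> ann_R Rc act" and a: "\<alpha> \<in> multi_idx n"
  shows "\<exists>s\<in>ann_R Rc act. s (\<lambda>i. 0) = r \<alpha> \<and> (\<forall>\<beta>\<in>multi_idx n. \<exists>c. s \<beta> = of_nat c * r (\<lambda>i. \<beta> i + \<alpha> i))"
proof -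
  obtain s where s: "s \<in> ann_R Rc act" and sf: "\<forall>\<beta>\<in>multi_idx n.
     s \<beta> = of_nat (\<Prod>i<n. (\<beta> i + \<alpha> i) choose (\<alpha> i)) * r (\<lambda>i. \<beta> i + (if i < n then \<alpha> i else 0))"
    using iterD[OF R M r, of n \<alpha>] by auto
  have e: "(\<lambda>i. \<beta> i + (if i < n then \<alpha> i else 0)) = (\<lambda>i. \<beta> i + \<alpha> i)" for \<beta>
    using a by (auto simp: fun_eq_iff multi_idx_def)
  have "s (\<lambda>i. 0) = r \<alpha>" using sf multi_idx_zero[of n] e[of "\<lambda>i. 0"] by simp
  moreover have "\<forall>\<beta>\<in>multi_idx n. \<exists>c. s \<beta> = of_nat c * r (\<lambda>i. \<beta> i + \<alpha> i)"
    using sf e by metis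
  ultimately show ?thesis using s by blast
qed

definition deg :: "nat \<Rightarrow> (nat \<Rightarrow> nat) \<Rightarrow> nat" where
  "deg n \<alpha> = (\<Sum>i<n. \<alpha> i)"

lemma deg_pos:
  assumes "\<beta> \<in> multi_idx n" "\<beta> \<noteq> (\<lambda>i. 0)"
  shows "0 < deg n \<beta>"
proof -
  obtain j where j: "\<beta> j \<noteq> 0" using assms(2) by auto
  have jn: "j < n" using assms(1) j unfolding multi_idx_def by (auto simp: not_less[symmetric])
  have "\<beta> j \<le> deg n \<beta>" unfolding deg_def by (rule member_le_sum) (use jn in auto)
  then show ?thesis using j by simp
qed

lemma deg_add: "deg n (\<lambda>i. \<beta> i + \<alpha> i) = deg n \<beta> + deg n \<alpha>"
  unfolding deg_def by (simp add: sum.distrib)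

lemma deg_diff_less:
  assumes a: "\<alpha> \<in> multi_idx n" and b: "\<beta> \<le> \<alpha>" and nz: "\<beta> \<noteq> (\<lambda>i. 0)"
  shows "deg n (\<lambda>i. \<alpha> i - \<beta> i) < deg n \<alpha>"
proof -
  have bm: "\<beta> \<in> multi_idx n" using multi_idx_le[OF a b] .
  obtain j where j: "\<beta> j \<noteq> 0" using nz by auto
  have jn: "j < n" using bm j unfolding multi_idx_def by (auto simp: not_less[symmetric])
  have "\<beta> j \<le> \<alpha> j" using b by (simp add: le_fun_def)
  show ?thesis unfolding deg_def
  proof (rule sum_strict_mono_ex1)
    show "\<forall>x\<in>{..<n}. \<alpha> x - \<beta> x \<le> \<alpha> x" by simp
    show "\<exists>a\<in>{..<n}. \<alpha> a - \<beta> a < \<alpha> a" using jn j \<open>\<beta> j \<le> \<alpha> j\<close> by (intro bexI[of _ j]) auto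
  qed simp
qed

primrec winv :: "nat \<Rightarrow> ('v::comm_ring_1) ser \<Rightarrow> 'v \<Rightarrow> nat \<Rightarrow> 'v ser" where
  "winv n t ci 0 = ser_zero"
| "winv n t ci (Suc N) = (\<lambda>\<alpha>. if \<alpha> \<in> multi_idx n then ci * (ser_const 1 \<alpha> - ser_mult t (winv n t ci N) \<alpha>) else 0)"

lemma ps_inverse:
  fixes s :: "('v::comm_ring_1) ser"
  assumes s: "s \<in> ps_carrier n" and c: "s (\<lambda>i. 0) * ci = 1"
  shows "\<exists>v\<in>ps_carrier n. ser_mult s v = ser_const 1"
proof -
  define t where "t = (\<lambda>\<alpha>. if \<alpha> = (\<lambda>i::nat. 0::nat) then 0 else s \<alpha>)"
  define w where "w = winv n t ci"
  have t0: "t \<beta> = 0" if "\<beta> = (\<lambda>i. 0)" for \<beta> using that by (simp add: t_def)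
  have stab: "\<forall>\<alpha>. \<alpha> \<in> multi_idx n \<longrightarrow> deg n \<alpha> < N \<longrightarrow> w (Suc N) \<alpha> = w N \<alpha>" for N
  proof (induction N)
    case 0 then show ?case by simp
  next
    case (Suc N)
    show ?case
    proof (intro allI impI)
      fix \<alpha> assume a: "\<alpha> \<in> multi_idx n" and d: "deg n \<alpha> < Suc N"
      have "ser_mult t (w (Suc N)) \<alpha> = ser_mult t (w N) \<alpha>"
        unfolding ser_mult_def
      proof (rule sum.cong[OF refl])
        fix \<beta> assume b: "\<beta> \<in> {\<beta>. \<beta> \<le> \<alpha>}"
        show "t \<beta> * w (Suc N) (\<lambda>i. \<alpha> i - \<beta> i) = t \<beta> * w N (\<lambda>i. \<alpha> i - \<beta> i)"
        proof (cases "\<beta> = (\<lambda>i. 0)")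
          case True then show ?thesis by (simp add: t0)
        next
          case False
          have "deg n (\<lambda>i. \<alpha> i - \<beta> i) < N" using deg_diff_less[OF a _ False] b d by simp
          then show ?thesis using Suc.IH multi_idx_diff[OF a] by simp
        qed
      qed
      then show "w (Suc (Suc N)) \<alpha> = w (Suc N) \<alpha>" by (simp add: w_def)
    qed
  qed
  have stab2: "w N' \<alpha> = w N \<alpha>" if "\<alpha> \<in> multi_idx n" "deg n \<alpha> < N" "N \<le> N'" for N N' \<alpha>
    using that(3)
  proof (induction N' rule: dec_induct)
    case base then show ?case by simp
  next
    case (step m)
    then show ?case using stab[of m] that(1,2) by simp
  qed
  define v where "v = (\<lambda>\<alpha>. w (Suc (deg n \<alpha>)) \<alpha>)"
  have vps: "v \<in> ps_carrier n" unfolding ps_carrier_def v_def w_def by simp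
  have tv: "ser_mult t v \<alpha> = ser_mult t (w (deg n \<alpha>)) \<alpha>" if a: "\<alpha> \<in> multi_idx n" for \<alpha>
    unfolding ser_mult_def
  proof (rule sum.cong[OF refl])
    fix \<beta> assume b: "\<beta> \<in> {\<beta>. \<beta> \<le> \<alpha>}"
    show "t \<beta> * v (\<lambda>i. \<alpha> i - \<beta> i) = t \<beta> * w (deg n \<alpha>) (\<lambda>i. \<alpha> i - \<beta> i)"
    proof (cases "\<beta> = (\<lambda>i. 0)")
      case True then show ?thesis by (simp add: t0)
    next
      case False
      have "deg n (\<lambda>i. \<alpha> i - \<beta> i) < deg n \<alpha>" by (rule deg_diff_less[OF a _ False]) (use b in simp)
      then have "w (deg n \<alpha>) (\<lambda>i. \<alpha> i - \<beta> i) = w (Suc (deg n (\<lambda>i. \<alpha> i - \<beta> i))) (\<lambda>i. \<alpha> i - \<beta> i)"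
        by (intro stab2[OF multi_idx_diff[OF a]]) auto
      then show ?thesis by (simp add: v_def)
    qed
  qed
  have sdec: "s = ser_add (ser_const (s (\<lambda>i. 0))) t"
  proof (rule ext)
    fix \<alpha> show "s \<alpha> = ser_add (ser_const (s (\<lambda>i. 0))) t \<alpha>"
      by (cases "\<alpha> = (\<lambda>i. 0)") (simp_all add: ser_add_def ser_const_def t_def)
  qed
  have "ser_mult s v \<alpha> = ser_const 1 \<alpha>" if a: "\<alpha> \<in> multi_idx n" for \<alpha>
  proof -
    have "ser_mult s v = ser_add (ser_mult (ser_const (s (\<lambda>i. 0))) v) (ser_mult t v)"
      by (subst sdec) (rule mult_add_left)
    then have "ser_mult s v \<alpha> = s (\<lambda>i. 0) * v \<alpha> + ser_mult t v \<alpha>"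
      using mult_const_at[OF a] by (simp add: ser_add_def)
    also have "v \<alpha> = ci * (ser_const 1 \<alpha> - ser_mult t (w (deg n \<alpha>)) \<alpha>)"
      using a by (simp add: v_def w_def)
    finally have "ser_mult s v \<alpha> = s (\<lambda>i. 0) * (ci * (ser_const 1 \<alpha> - ser_mult t (w (deg n \<alpha>)) \<alpha>)) + ser_mult t (w (deg n \<alpha>)) \<alpha>"
      using tv[OF a] by simp
    also have "\<dots> = (s (\<lambda>i. 0) * ci) * (ser_const 1 \<alpha> - ser_mult t (w (deg n \<alpha>)) \<alpha>) + ser_mult t (w (deg n \<alpha>)) \<alpha>"
      by (simp only: mult.assoc)
    also have "\<dots> = ser_const 1 \<alpha>" using c by simp
    finally show ?thesis .
  qed
  then have "ser_mult s v = ser_const 1"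
    by (intro ps_eqI[of _ n] mult_in[OF okc_ps_self s vps] const_in[OF okc_ps_self]) auto
  then show ?thesis using vps by blast
qed

lemma divide_pi:
  fixes f :: "('v::idom) ser"
  assumes R: "okc n Rc" and f: "f \<in> Rc" and p: "\<pi> \<noteq> 0" and d: "\<forall>\<alpha>\<in>multi_idx n. \<pi> dvd f \<alpha>"
  shows "\<exists>g\<in>Rc. f = ser_mult (ser_const \<pi>) g"
proof -
  define g where "g = (\<lambda>\<alpha>. if \<alpha> \<in> multi_idx n then (SOME q. f \<alpha> = \<pi> * q) else 0)"
  have gq: "f \<alpha> = \<pi> * g \<alpha>" if "\<alpha> \<in> multi_idx n" for \<alpha>
  proof -
    have "\<exists>q. f \<alpha> = \<pi> * q" using d that unfolding dvd_def by blast
    then have "f \<alpha> = \<pi> * (SOME q. f \<alpha> = \<pi> * q)" by (rule someI_ex)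
    then show ?thesis unfolding g_def using that by simp
  qed
  have gR: "g \<in> Rc"
  proof (rule okc_supp[OF R f])
    fix \<alpha> assume "g \<alpha> \<noteq> 0"
    then have "\<alpha> \<in> multi_idx n" unfolding g_def by (auto split: if_splits)
    then show "f \<alpha> \<noteq> 0" using gq p \<open>g \<alpha> \<noteq> 0\<close> by simp
  qed
  have "f = ser_mult (ser_const \<pi>) g"
    by (rule ps_eqI[OF okc_ps[OF R f] mult_in[OF okc_ps_self const_in[OF okc_ps_self] okc_ps[OF R gR]]])
       (simp add: mult_const_at gq)
  then show ?thesis using gR by blast
qed

lemma dvr_unit:
  assumes "DVR_uniformizer (\<pi>::'v::idom)" "\<not> \<pi> dvd a"
  shows "a dvd 1"
proof -
  have "a \<noteq> 0" using assms(2) by auto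
  then obtain u k where u: "u dvd 1" "a = u * \<pi> ^ k" using assms(1) unfolding DVR_uniformizer_def by blast
  have "k = 0"
  proof (rule ccontr)
    assume "k \<noteq> 0"
    then have "\<pi> dvd \<pi> ^ k" by simp
    then have "\<pi> dvd a" using u(2) by simp
    then show False using assms(2) by simp
  qed
  then show ?thesis using u by simp
qed

theorem lemma3p4:
  fixes \<pi> :: "'v::{idom, ring_char_0}"
    and p n :: nat
    and Rc :: "'v ser set"
    and act :: "('v ser \<Rightarrow> 'v ser) \<Rightarrow> 'm::ab_group_add \<Rightarrow> 'm"
  assumes "DVR_uniformizer \<pi>"
    and "prime p" and "\<pi> dvd of_nat p"
    and "Rc = ps_carrier n \<or> Rc = poly_carrier n"
    and "D_module Rc act"
    and "\<exists>m::'m. m \<noteq> 0"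
    and "\<forall>m. act (mult_op Rc (ser_const \<pi>)) m = 0"
  shows "ann_R Rc act = {ser_mult (ser_const \<pi>) r | r. r \<in> Rc}"
proof -
  have R: "okc n Rc" using assms(4) unfolding okc_def .
  have M: "D_module Rc act" by (rule assms(5))
  have pi0: "\<pi> \<noteq> 0" using assms(1) unfolding DVR_uniformizer_def by blast
  have piJ: "ser_const \<pi> \<in> ann_R Rc act" using assms(7) const_in[OF R] unfolding ann_R_def by blast
  have multpi: "ser_mult (ser_const \<pi>) r \<in> ann_R Rc act" if r: "r \<in> Rc" for r
  proof -
    have "ser_mult r (ser_const \<pi>) \<in> ann_R Rc act" by (rule ann_mult[OF R M r piJ])
    then show ?thesis by (simp add: mult_comm)
  qed
  have no1: "ser_const 1 \<notin> ann_R Rc act"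
  proof
    assume "ser_const 1 \<in> ann_R Rc act"
    then have "\<And>m::'m. m = 0" using one_ann[OF R M] by blast
    then show False using assms(6) by blast
  qed
  have unit_const: False if u: "u dvd 1" and uJ: "ser_const u \<in> ann_R Rc act" for u
  proof -
    obtain u' where u': "1 = u * u'" using u unfolding dvd_def by blast
    have "ser_mult (ser_const u') (ser_const u) = scal u' (ser_const u)"
      by (rule mult_const[OF const_in[OF okc_ps_self]])
    also have "\<dots> = ser_const 1"
    proof (rule ext)
      fix \<beta> show "scal u' (ser_const u) \<beta> = ser_const 1 \<beta>"
        using u' by (simp add: scal_def ser_const_def mult.commute)
    qed
    finally have "ser_mult (ser_const u') (ser_const u) = ser_const 1" .
    then have "ser_const 1 \<in> ann_R Rc act" using ann_mult[OF R M const_in[OF R] uJ] by metis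
    then show False using no1 by simp
  qed
  show ?thesis
  proof
    show "{ser_mult (ser_const \<pi>) r | r. r \<in> Rc} \<subseteq> ann_R Rc act" using multpi by blast
  next
    show "ann_R Rc act \<subseteq> {ser_mult (ser_const \<pi>) r | r. r \<in> Rc}"
    proof
      fix x assume xJ: "x \<in> ann_R Rc act"
      have xR: "x \<in> Rc" using xJ unfolding ann_R_def by blast
      show "x \<in> {ser_mult (ser_const \<pi>) r | r. r \<in> Rc}"
      proof (cases "\<forall>\<alpha>\<in>multi_idx n. \<pi> dvd x \<alpha>")
        case True
        then obtain g where "g \<in> Rc" "x = ser_mult (ser_const \<pi>) g" using divide_pi[OF R xR pi0] by blast
        then show ?thesis by blast
      next
        case False
        then obtain \<alpha> where a: "\<alpha> \<in> multi_idx n" "\<not> \<pi> dvd x \<alpha>" by blast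
        show ?thesis
        proof (cases "Rc = ps_carrier n")
          case True
          obtain s where s: "s \<in> ann_R Rc act" "s (\<lambda>i. 0) = x \<alpha>"
            using iterD_full[OF R M xJ a(1)] by blast
          have sR: "s \<in> Rc" using s(1) unfolding ann_R_def by blast
          have "x \<alpha> dvd 1" by (rule dvr_unit[OF assms(1) a(2)])
          then obtain ci where ci: "s (\<lambda>i. 0) * ci = 1" using s(2) unfolding dvd_def by (metis)
          obtain v where v: "v \<in> ps_carrier n" "ser_mult s v = ser_const 1"
            using ps_inverse[OF okc_ps[OF R sR] ci] by blast
          have "ser_mult v s \<in> ann_R Rc act" using ann_mult[OF R M _ s(1)] v(1) True by simp
          then have "ser_const 1 \<in> ann_R Rc act" using v(2) by (simp add: mult_comm)
          then show ?thesis using no1 by simp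
        next
          case False
          hence P: "Rc = poly_carrier n" using assms(4) by blast
          define S where "S = {\<alpha> \<in> multi_idx n. \<not> \<pi> dvd x \<alpha>}"
          have "S \<subseteq> {\<alpha>. x \<alpha> \<noteq> 0}" unfolding S_def by auto
          moreover have "finite {\<alpha>. x \<alpha> \<noteq> 0}" using xR P unfolding poly_carrier_def by blast
          ultimately have fS: "finite S" using finite_subset by blast
          have neS: "\<alpha> \<in> S" using a unfolding S_def by blast
          define Mx where "Mx = Max (deg n ` S)"
          have "Mx \<in> deg n ` S" unfolding Mx_def using fS neS by (intro Max_in) auto
          then obtain \<alpha>0 where a0: "\<alpha>0 \<in> S" "deg n \<alpha>0 = Mx" by blast
          have maxd: "deg n \<beta> \<le> deg n \<alpha>0" if "\<beta> \<in> S" for \<beta>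
            using a0(2) fS that unfolding Mx_def by simp
          have a0m: "\<alpha>0 \<in> multi_idx n" and a0d: "\<not> \<pi> dvd x \<alpha>0" using a0(1) unfolding S_def by auto
          obtain s where s: "s \<in> ann_R Rc act" "s (\<lambda>i. 0) = x \<alpha>0"
            and sc: "\<forall>\<beta>\<in>multi_idx n. \<exists>c. s \<beta> = of_nat c * x (\<lambda>i. \<beta> i + \<alpha>0 i)"
            using iterD_full[OF R M xJ a0m] by blast
          have sR: "s \<in> Rc" using s(1) unfolding ann_R_def by blast
          define s' where "s' = (\<lambda>\<beta>. if \<beta> = (\<lambda>i::nat. 0::nat) then 0 else s \<beta>)"
          have s'R: "s' \<in> Rc" by (rule okc_supp[OF R sR]) (simp add: s'_def split: if_splits)
          have s'd: "\<forall>\<beta>\<in>multi_idx n. \<pi> dvd s' \<beta>"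
          proof
            fix \<beta> assume b: "\<beta> \<in> multi_idx n"
            show "\<pi> dvd s' \<beta>"
            proof (cases "\<beta> = (\<lambda>i. 0)")
              case True then show ?thesis by (simp add: s'_def)
            next
              case False
              have bm: "(\<lambda>i. \<beta> i + \<alpha>0 i) \<in> multi_idx n" using multi_idx_add[OF b a0m] .
              have "deg n (\<lambda>i. \<beta> i + \<alpha>0 i) > deg n \<alpha>0" using deg_pos[OF b False] deg_add by simp
              then have "(\<lambda>i. \<beta> i + \<alpha>0 i) \<notin> S" using maxd by (meson not_le)
              then have "\<pi> dvd x (\<lambda>i. \<beta> i + \<alpha>0 i)" using bm unfolding S_def by blast
              moreover obtain c where "s \<beta> = of_nat c * x (\<lambda>i. \<beta> i + \<alpha>0 i)" using sc b by blast
              ultimately show ?thesis using False by (simp add: s'_def)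
            qed
          qed
          obtain g where g: "g \<in> Rc" "s' = ser_mult (ser_const \<pi>) g" using divide_pi[OF R s'R pi0 s'd] by blast
          have s'J: "s' \<in> ann_R Rc act" using multpi[OF g(1)] g(2) by simp
          have negJ: "ser_mult (ser_const (-1)) s' \<in> ann_R Rc act" by (rule ann_mult[OF R M const_in[OF R] s'J])
          have sumJ: "ser_add s (ser_mult (ser_const (-1)) s') \<in> ann_R Rc act" by (rule ann_add[OF R M s(1) negJ])
          have "ser_add s (ser_mult (ser_const (-1)) s') = ser_const (x \<alpha>0)"
          proof (rule ext)
            fix \<beta>
            have ms: "ser_mult (ser_const (-1)) s' = scal (-1) s'" by (rule mult_const[OF okc_ps[OF R s'R]])
            show "ser_add s (ser_mult (ser_const (-1)) s') \<beta> = ser_const (x \<alpha>0) \<beta>"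
              unfolding ms using s(2) by (cases "\<beta> = (\<lambda>i. 0)")
                (simp_all add: scal_def ser_add_def s'_def ser_const_def)
          qed
          then have "ser_const (x \<alpha>0) \<in> ann_R Rc act" using sumJ by simp
          then show ?thesis using unit_const[OF dvr_unit[OF assms(1) a0d]] by blast
        qed
      qed
    qed
  qed
qed

end
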